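(* Let $P,p,\kappa\in\mathbb{C}\setminus\{0\}$, and let $(\ast)$ be the PDE of the context. (i) Suppose $B(x,y)=\sum_{k=0}^{\infty}x^kB_k(y)$ is a formal solution of $(\ast)$ with each $B_k(y)$ rational in $y$ and $B_0\not\equiv0$. Then $B_0(y)\equiv q$ for some constant $q\in\mathbb{C}\setminus\{0\}$, $$B_1(y)=c_2y^3+c_1y+\frac{8p^2(q^3-1)}{3\kappa^2P^2q\,y}$$ for some $c_1,c_2\in\mathbb{C}$, and for every $k\in\mathbb{N}$, $B_k$ is a Laurent polynomial of the form $B_k(y)=\sum_{m=0}^{2k}\beta_{k,2m-k}\,y^{2m-k}$, where the two top coefficients $c_{2k}:=\beta_{k,3k}$ and $c_{2k-1}:=\beta_{k,3k-2}$ are (free) complex constants, and for $0\le m\le 2k-2$ the coefficient $\beta_{k,2m-k}$ is a polynomial in $c_1,\dots,c_{2k-2}$ of the form $$\beta_{k,2m-k}=\sum_{\substack{n_1,\dots,n_{2k-2}\ge0\\ \sum_j j n_j\le m}}\mathfrak b_{k;n_1,\dots,n_{2k-2}}(\kappa^2,P,p,q)\prod_{j=1}^{2k-2}c_j^{n_j},$$ with coefficients $\mathfrak b$ rational functions of $\kappa^2,P,p,q$. In particular, for $k\ge2$, $\beta_{k,-k}$ does not depend on the $c_j$ and $\beta_{k,2-k}$ is an affine function of $c_1$ alone. (ii) Conversely, for every $q\in\mathbb{C}\setminus\{0\}$ and every sequence $(c_n)_{n\in\mathbb{N}}\subset\mathbb{C}$ there exists a formal solution $\sum_{k\ge0}x^kB_k(y)$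 of $(\ast)$ with $B_0\equiv q$ and coefficients $B_k$ rational in $y,P,p^2,\kappa^2$ of the form described in (i), and it is unique under the normalization that, for each $k\in\mathbb{N}$, the coefficients of $y^{3k}$ and $y^{3k-2}$ in $B_k$ equal $c_{2k}$ and $c_{2k-1}$, respectively.
   Context: Fix $P,p,\kappa\in\mathbb{C}\setminus\{0\}$. Let $D$ be the first-order differential operator in two variables $x,y$: $$D=\Big(\frac{y}{2}+\frac{iP}{x}\Big(-\frac12+\frac{\kappa^2(y^2-x^2)}{4(4xy+\kappa^2(y-x)^2)}\Big)\Big)\frac{\partial}{\partial y}+\Big(\frac{x}{2}+\frac{iP}{y}\Big(\frac12+\frac{\kappa^2(y^2-x^2)}{4(4xy+\kappa^2(y-x)^2)}\Big)\Big)\frac{\partial}{\partial x},$$ and let $(\ast)$ denote the PDE $$D^2\ln A=-\frac{4p^2}{3xy\,(4xy+\kappa^2(y-x)^2)}\Big(A-\frac{1}{A^2}\Big)$$ for an unknown $A=A(x,y)$. A series $\sum_k x^kB_k(y)$ with coefficients rational in $y$ is called a formal solution if, after substitution into $(\ast)$ (with $D^2\ln A=(A\,D^2A-(DA)^2)/A^2$, denominators cleared) and expansion in powers of $x$, all coefficients vanish identically. *)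

theory Defs
  imports Complex_Main "HOL-Computational_Algebra.Computational_Algebra"
begin

text \<open>Rational functions of y are embedded into the field of formal Laurent series
  in y (expansion at y = 0); this embedding is injective and commutes with d/dy.\<close>

type_synonym ratY = "complex fls"
type_synonym ser = "complex fls fls"

definition rational_y :: "ratY \<Rightarrow> bool" where
  "rational_y f \<longleftrightarrow> (\<exists>a b :: complex poly. b \<noteq> 0 \<and>
      fps_to_fls (fps_of_poly b) * f = fps_to_fls (fps_of_poly a))"

definition series :: "(nat \<Rightarrow> ratY) \<Rightarrow> ser" where
  "series B = fps_to_fls (Abs_fps B)"

definition Dy :: "ser \<Rightarrow> ser" where
  "Dy F = Abs_fls (\<lambda>n. fls_deriv (fls_nth F n))"

definition Dx :: "ser \<Rightarrow> ser" where
  "Dx F = fls_deriv F"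

definition Xv :: ser where "Xv = fls_X"
definition Yv :: ser where "Yv = fls_const fls_X"
definition cst :: "complex \<Rightarrow> ser" where "cst c = fls_const (fls_const c)"

definition Qf :: "complex \<Rightarrow> ser" where
  "Qf \<kappa> = 4 * Xv * Yv + cst (\<kappa>^2) * (Yv - Xv)^2"

definition Rf :: "complex \<Rightarrow> ser" where
  "Rf \<kappa> = cst (\<kappa>^2) * (Yv^2 - Xv^2) / (4 * Qf \<kappa>)"

definition opD :: "complex \<Rightarrow> complex \<Rightarrow> ser \<Rightarrow> ser" where
  "opD P \<kappa> F =
     (Yv / 2 + cst (\<i> * P) / Xv * (- 1/2 + Rf \<kappa>)) * Dy F
   + (Xv / 2 + cst (\<i> * P) / Yv * (1/2 + Rf \<kappa>)) * Dx F"

text \<open>The PDE (*): D^2 ln A = (A D^2 A - (D A)^2)/A^2 = -4p^2/(3xy Q) (A - 1/A^2).\<close>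
definition pde :: "complex \<Rightarrow> complex \<Rightarrow> complex \<Rightarrow> ser \<Rightarrow> bool" where
  "pde P p \<kappa> A \<longleftrightarrow>
     (A * opD P \<kappa> (opD P \<kappa> A) - (opD P \<kappa> A)^2) / A^2
       = - cst (4 * p^2) / (3 * Xv * Yv * Qf \<kappa>) * (A - 1 / A^2)"

definition formal_solution :: "complex \<Rightarrow> complex \<Rightarrow> complex \<Rightarrow> (nat \<Rightarrow> ratY) \<Rightarrow> bool" where
  "formal_solution P p \<kappa> B \<longleftrightarrow> (\<forall>k. rational_y (B k)) \<and> pde P p \<kappa> (series B)"

type_synonym poly4 = "complex poly poly poly poly"

definition eval4 :: "poly4 \<Rightarrow> complex \<times> complex \<times> complex \<times> complex \<Rightarrow> complex" where
  "eval4 N w = (case w of (a, b, c, d) \<Rightarrow>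
      poly (poly (poly (poly N [:[:[:d:]:]:]) [:[:c:]:]) [:b:]) a)"

definition cB :: "(nat \<Rightarrow> ratY) \<Rightarrow> nat \<Rightarrow> complex" where
  "cB B j = (if even j then fls_nth (B (j div 2)) (int (3 * (j div 2)))
             else fls_nth (B ((j + 1) div 2)) (int (3 * ((j + 1) div 2)) - 2))"

definition expset :: "nat \<Rightarrow> nat \<Rightarrow> (nat \<Rightarrow> nat) set" where
  "expset k m = {n. (\<forall>j. n j \<noteq> 0 \<longrightarrow> 1 \<le> j \<and> j \<le> 2 * k - 2) \<and>
                    (\<Sum>j = 1..2 * k - 2. j * n j) \<le> m}"

definition coeff_form ::
  "(nat \<Rightarrow> nat \<Rightarrow> (nat \<Rightarrow> nat) \<Rightarrow> poly4) \<Rightarrow> (nat \<Rightarrow> nat \<Rightarrow> (nat \<Rightarrow> nat) \<Rightarrow> poly4)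
   \<Rightarrow> complex \<times> complex \<times> complex \<times> complex \<Rightarrow> (nat \<Rightarrow> ratY) \<Rightarrow> bool" where
  "coeff_form N D w B \<longleftrightarrow>
     (\<forall>k \<ge> 1.
        (\<forall>j. fls_nth (B k) j \<noteq> 0 \<longrightarrow> (\<exists>m \<le> 2 * k. j = int (2 * m) - int k)) \<and>
        (\<forall>m \<le> 2 * k - 2. \<forall>n \<in> expset k m. eval4 (D k m n) w \<noteq> 0) \<and>
        (\<forall>m \<le> 2 * k - 2. fls_nth (B k) (int (2 * m) - int k) =
            (\<Sum>n \<in> expset k m. eval4 (N k m n) w / eval4 (D k m n) w *
                               (\<Prod>j = 1..2 * k - 2. cB B j ^ n j))))"

end

theory Submission
  imports Defs
begin
notation fls_nth (infixl "$$" 75)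

lemma fls_times_nth_bounds:
  fixes f g :: "'a::comm_ring_1 fls"
  assumes f: "\<And>i. i < m \<Longrightarrow> f$$i = 0" and g: "\<And>i. i < m' \<Longrightarrow> g$$i = 0"
  shows "(f*g)$$n = (\<Sum>i=m..n-m'. f$$i * g$$(n-i))"
proof (cases "f = 0 \<or> g = 0")
  case True thus ?thesis by auto
next
  case False
  hence fz: "f \<noteq> 0" and gz: "g \<noteq> 0" by auto
  have m1: "m \<le> fls_subdegree f"
    using f nth_fls_subdegree_nonzero[OF fz] by force
  have m2: "m' \<le> fls_subdegree g"
    using g nth_fls_subdegree_nonzero[OF gz] by force
  have "(f*g)$$n = (\<Sum>i=fls_subdegree f..n - fls_subdegree g. f$$i * g$$(n-i))"
    by (rule fls_times_nth(2))
  also have "\<dots> = (\<Sum>i=m..n-m'. f$$i * g$$(n-i))"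
  proof (rule sum.mono_neutral_left)
    show "finite {m..n - m'}" by simp
    show "{fls_subdegree f..n - fls_subdegree g} \<subseteq> {m..n - m'}" using m1 m2 by auto
    show "\<forall>i\<in>{m..n - m'} - {fls_subdegree f..n - fls_subdegree g}. f $$ i * g $$ (n - i) = 0"
    proof
      fix i assume "i \<in> {m..n - m'} - {fls_subdegree f..n - fls_subdegree g}"
      hence "i < fls_subdegree f \<or> n - i < fls_subdegree g" by auto
      thus "f $$ i * g $$ (n - i) = 0" by auto
    qed
  qed
  finally show ?thesis .
qed

lemma Dy_nth [simp]: "Dy F $$ n = fls_deriv (F $$ n)"
proof -
  obtain N where N: "\<forall>n<N. F$$n = 0" by (rule fls_nth_vanishes_belowE)
  show ?thesis unfolding Dy_def
    by (rule nth_Abs_fls_lower_bound[of N]) (use N in auto)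
qed

lemma Dy_add [simp]: "Dy (F + G) = Dy F + Dy G"
  by (rule fls_eqI) simp
lemma Dy_diff [simp]: "Dy (F - G) = Dy F - Dy G"
  by (rule fls_eqI) simp
lemma Dy_uminus [simp]: "Dy (- F) = - Dy F"
  by (rule fls_eqI) simp
lemma Dy_const [simp]: "Dy (fls_const f) = fls_const (fls_deriv f)"
  by (rule fls_eqI) simp
lemma Dy_Xv [simp]: "Dy fls_X = 0"
  by (rule fls_eqI) simp
lemma Dy_zero [simp]: "Dy 0 = 0" by (rule fls_eqI) simp
lemma Dy_one [simp]: "Dy 1 = 0" by (rule fls_eqI) simp

lemma Dy_mult: "Dy (F * G) = F * Dy G + Dy F * G"
proof (rule fls_eqI)
  fix n
  define m where "m = fls_subdegree F"
  define m' where "m' = fls_subdegree G"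
  have F0: "\<And>i. i < m \<Longrightarrow> F$$i = 0" and G0: "\<And>i. i < m' \<Longrightarrow> G$$i = 0"
    by (auto simp: m_def m'_def)
  have DF0: "\<And>i. i < m \<Longrightarrow> Dy F$$i = 0" and DG0: "\<And>i. i < m' \<Longrightarrow> Dy G$$i = 0"
    by (auto simp: m_def m'_def)
  have "Dy (F*G) $$ n = fls_deriv (\<Sum>i=m..n-m'. F$$i * G$$(n-i))"
    by (simp add: fls_times_nth_bounds[OF F0 G0])
  also have "\<dots> = (\<Sum>i=m..n-m'. F$$i * fls_deriv (G$$(n-i)) + fls_deriv (F$$i) * G$$(n-i))"
    by (simp add: fls_deriv_sum)
  also have "\<dots> = (F * Dy G + Dy F * G) $$ n"
    by (simp add: fls_times_nth_bounds[OF F0 DG0] fls_times_nth_bounds[OF DF0 G0] sum.distrib)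
  finally show "Dy (F*G) $$ n = (F * Dy G + Dy F * G) $$ n" .
qed

lemma Dy_divide: assumes "G \<noteq> 0"
  shows "Dy (F / G) = (Dy F * G - F * Dy G) / G^2"
proof -
  have "F = (F/G) * G" using assms by simp
  hence "Dy F = (F/G) * Dy G + Dy (F/G) * G" by (metis Dy_mult)
  thus ?thesis using assms by (simp add: field_simps power2_eq_square)
qed

lemma Dx_mult: "Dx (F * G) = F * Dx G + Dx F * G" by (simp add: Dx_def)
lemma Dx_divide: assumes "G \<noteq> 0"
  shows "Dx (F / G) = (Dx F * G - F * Dx G) / G^2"
proof -
  have "F = (F/G) * G" using assms by simp
  hence "Dx F = (F/G) * Dx G + Dx (F/G) * G" by (metis Dx_mult)
  thus ?thesis using assms by (simp add: field_simps power2_eq_square)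
qed
lemma Dx_add [simp]: "Dx (F + G) = Dx F + Dx G" by (simp add: Dx_def)
lemma Dx_diff [simp]: "Dx (F - G) = Dx F - Dx G" by (simp add: Dx_def)
lemma Dx_const [simp]: "Dx (fls_const f) = 0" by (simp add: Dx_def)
lemma Dx_zero [simp]: "Dx 0 = 0" by (simp add: Dx_def)
lemma Dx_one [simp]: "Dx 1 = 0" by (simp add: Dx_def)
lemma Dx_nth: "Dx F $$ n = of_int (n+1) * F $$ (n+1)" by (simp add: Dx_def)

definition co :: "ser \<Rightarrow> int \<Rightarrow> int \<Rightarrow> complex" where
  "co F a b = F $$ a $$ b"

lemma fls_X_times_nth: "(fls_X * (f::'a::comm_ring_1 fls)) $$ n = f $$ (n - 1)"
  using fls_X_power_times_conv_shift(1)[of 1 f] by simp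

lemma fls_const_add': "fls_const (a + b) = fls_const a + (fls_const b :: 'a::comm_ring_1 fls)"
  by (rule fls_eqI) simp
lemma fls_const_diff': "fls_const (a - b) = fls_const a - (fls_const b :: 'a::comm_ring_1 fls)"
  by (rule fls_eqI) simp
lemma cst_add: "cst (a + b) = cst a + cst b" by (simp add: cst_def fls_const_add')
lemma cst_mult: "cst (a * b) = cst a * cst b" by (simp add: cst_def)
lemma cst_diff: "cst (a - b) = cst a - cst b" by (simp add: cst_def fls_const_diff')
lemma cst_numeral [simp]: "cst (numeral n) = numeral n" by (simp add: cst_def)
lemma cst_one [simp]: "cst 1 = 1" by (simp add: cst_def)
lemma cst_zero [simp]: "cst 0 = 0" by (simp add: cst_def)
lemma cst_uminus: "cst (- a) = - cst a" by (simp add: cst_def)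

lemma co_add [simp]: "co (F + G) a b = co F a b + co G a b" by (simp add: co_def)
lemma co_diff [simp]: "co (F - G) a b = co F a b - co G a b" by (simp add: co_def)
lemma co_uminus [simp]: "co (- F) a b = - co F a b" by (simp add: co_def)
lemma co_zero [simp]: "co 0 a b = 0" by (simp add: co_def)
lemma co_cst_mult [simp]: "co (cst c * F) a b = c * co F a b" by (simp add: co_def cst_def)
lemma co_Xv_mult [simp]: "co (Xv * F) a b = co F (a - 1) b"
  by (simp add: co_def Xv_def fls_X_times_nth)
lemma co_Yv_mult [simp]: "co (Yv * F) a b = co F a (b - 1)"
  by (simp add: co_def Yv_def fls_X_times_nth)
lemma co_cst [simp]: "co (cst c) a b = (if a = 0 \<and> b = 0 then c else 0)"
  by (simp add: co_def cst_def)
lemma co_one [simp]: "co 1 a b = (if a = 0 \<and> b = 0 then 1 else 0)"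
  using co_cst[of 1] by simp
lemma co_Xv [simp]: "co Xv a b = (if a = 1 \<and> b = 0 then 1 else 0)"
  using co_Xv_mult[of 1 a b] by simp
lemma co_Yv [simp]: "co Yv a b = (if a = 0 \<and> b = 1 then 1 else 0)"
  using co_Yv_mult[of 1 a b] by simp
lemma co_numeral_mult [simp]: "co (numeral n * F) a b = numeral n * co F a b"
  using co_cst_mult[of "numeral n"] by simp
lemma co_eqI: "(\<And>a b. co F a b = co G a b) \<Longrightarrow> F = G"
  by (simp add: co_def fls_eq_iff)

definition thx :: "ser \<Rightarrow> ser" where "thx F = Xv * Dx F"
definition thy :: "ser \<Rightarrow> ser" where "thy F = Yv * Dy F"

lemma co_thx [simp]: "co (thx F) a b = of_int a * co F a b"
  by (simp add: thx_def co_def Xv_def fls_X_times_nth Dx_nth)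
lemma co_thy [simp]: "co (thy F) a b = of_int b * co F a b"
  by (simp add: thy_def co_def Yv_def fls_X_times_nth)

definition Qg :: "complex \<Rightarrow> ser" where
  "Qg K = 4 * Xv * Yv + cst K * (Yv - Xv)^2"
definition Wg :: "complex \<Rightarrow> ser" where
  "Wg K = 4 * Xv * Yv * Qg K"

definition Mop :: "complex \<Rightarrow> complex \<Rightarrow> ser \<Rightarrow> ser" where
  "Mop K P F =
     cst (2*K) * (Xv * (Yv * (Yv * (Yv * (thx F + thy F)))))
   + cst (8 - 4*K) * (Xv * (Xv * (Yv * (Yv * (thx F + thy F)))))
   + cst (2*K) * (Xv * (Xv * (Xv * (Yv * (thx F + thy F)))))
   + cst (\<i>*P*K) * (Yv * (Yv * (cst 3 * thx F - thy F)))
   + cst (\<i>*P*(8 - 4*K)) * (Xv * (Yv * (thx F - thy F)))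
   + cst (\<i>*P*K) * (Xv * (Xv * (thx F - cst 3 * thy F)))"

lemma co_Mop: "co (Mop K P F) a b =
     2*K * of_int (a - 1 + (b - 3)) * co F (a - 1) (b - 3)
   + (8 - 4*K) * of_int (a - 2 + (b - 2)) * co F (a - 2) (b - 2)
   + 2*K * of_int (a - 3 + (b - 1)) * co F (a - 3) (b - 1)
   + \<i>*P*K * of_int (3*a - (b - 2)) * co F a (b - 2)
   + \<i>*P*(8 - 4*K) * of_int ((a - 1) - (b - 1)) * co F (a - 1) (b - 1)
   + \<i>*P*K * of_int ((a - 2) - 3*b) * co F (a - 2) b"
  apply (simp add: Mop_def)
  apply (simp add: algebra_simps)
  done

lemma co_Qg: "co (Qg K) a b = (if a = 0 \<and> b = 2 then K else if a = 1 \<and> b = 1 then 4 - 2*K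
   else if a = 2 \<and> b = 0 then K else 0)"
proof -
  have "Qg K = cst K * (Yv * (Yv * 1)) + cst (4 - 2*K) * (Xv * (Yv * 1)) + cst K * (Xv * (Xv * 1))"
    by (simp add: Qg_def cst_diff cst_mult algebra_simps power2_eq_square)
  thus ?thesis by auto
qed

lemma co_Wg: "co (Wg K) a b = (if a = 1 \<and> b = 3 then 4*K else if a = 2 \<and> b = 2 then 16 - 8*K
   else if a = 3 \<and> b = 1 then 4*K else 0)"
proof -
  have "Wg K = 4 * (Xv * (Yv * Qg K))"
    by (simp add: Wg_def algebra_simps)
  thus ?thesis by (auto simp: co_Qg)
qed

lemma Xv_nz [simp]: "Xv \<noteq> 0" by (simp add: Xv_def)
lemma Yv_nz [simp]: "Yv \<noteq> 0" by (simp add: Yv_def fls_const_nonzero)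
lemma Qg_nz: "K \<noteq> 0 \<Longrightarrow> Qg K \<noteq> 0"
  using co_Qg[of K 0 2] by (auto simp: co_def)
lemma Wg_nz: "K \<noteq> 0 \<Longrightarrow> Wg K \<noteq> 0"
  using co_Wg[of K 1 3] by (auto simp: co_def)

lemma Qf_Qg: "Qf \<kappa> = Qg (\<kappa>^2)" by (simp add: Qf_def Qg_def)

lemma opD_Mop:
  assumes "\<kappa> \<noteq> 0"
  shows "opD P \<kappa> F = Mop (\<kappa>^2) P F / Wg (\<kappa>^2)"
proof -
  have Q: "Qg (\<kappa>^2) \<noteq> 0" using assms by (simp add: Qg_nz)
  show ?thesis
    using Q unfolding opD_def Rf_def Qf_Qg Mop_def Wg_def thx_def thy_def
    apply (simp add: cst_mult cst_diff cst_add field_simps)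
    apply (simp add: Qg_def algebra_simps power2_eq_square)
    done
qed

lemma thx_mult: "thx (F * G) = F * thx G + thx F * G"
  by (simp add: thx_def Dx_mult algebra_simps)
lemma thy_mult: "thy (F * G) = F * thy G + thy F * G"
  by (simp add: thy_def Dy_mult algebra_simps)
lemma thx_add [simp]: "thx (F + G) = thx F + thx G" by (simp add: thx_def algebra_simps)
lemma thy_add [simp]: "thy (F + G) = thy F + thy G" by (simp add: thy_def algebra_simps)
lemma thx_diff [simp]: "thx (F - G) = thx F - thx G" by (simp add: thx_def algebra_simps)
lemma thy_diff [simp]: "thy (F - G) = thy F - thy G" by (simp add: thy_def algebra_simps)
lemma thx_cst [simp]: "thx (cst c) = 0" by (simp add: thx_def cst_def)
lemma thy_cst [simp]: "thy (cst c) = 0" by (simp add: thy_def cst_def)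

lemma Mop_mult: "Mop K P (F * G) = F * Mop K P G + Mop K P F * G"
  by (simp add: Mop_def thx_mult thy_mult algebra_simps)
lemma Mop_add [simp]: "Mop K P (F + G) = Mop K P F + Mop K P G"
  by (simp add: Mop_def algebra_simps)
lemma Mop_diff [simp]: "Mop K P (F - G) = Mop K P F - Mop K P G"
  by (simp add: Mop_def algebra_simps)
lemma Mop_cst [simp]: "Mop K P (cst c) = 0"
  by (simp add: Mop_def)
lemma Mop_one [simp]: "Mop K P 1 = 0"
  using Mop_cst[of K P 1] by simp
lemma Mop_divide: assumes "G \<noteq> 0"
  shows "Mop K P (F / G) = (G * Mop K P F - F * Mop K P G) / G^2"
proof -
  have "F = (F/G) * G" using assms by simp
  hence "Mop K P F = (F/G) * Mop K P G + Mop K P (F/G) * G" by (metis Mop_mult)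
  thus ?thesis using assms by (simp add: field_simps power2_eq_square)
qed

definition Eg :: "complex \<Rightarrow> complex \<Rightarrow> complex \<Rightarrow> ser \<Rightarrow> ser" where
  "Eg K P p2 A = 3 * (A * (Wg K * Mop K P (Mop K P A) - Mop K P A * Mop K P (Wg K))
      - Wg K * (Mop K P A)^2) + 16 * cst p2 * (A^3 - 1) * (Wg K)^2"

lemma pde_iff_Eg:
  assumes k: "\<kappa> \<noteq> 0" and A: "A \<noteq> 0"
  shows "pde P p \<kappa> A \<longleftrightarrow> Eg (\<kappa>^2) P (p^2) A = 0"
proof -
  define K where "K = \<kappa>^2"
  have K: "K \<noteq> 0" using k by (simp add: K_def)
  define W where "W = Wg K"
  have W: "W \<noteq> 0" using K by (simp add: W_def Wg_nz)
  have Q: "Qg K \<noteq> 0" using K by (simp add: Qg_nz)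
  define M where "M = Mop K P"
  have D: "\<And>F. opD P \<kappa> F = M F / W" using opD_Mop[OF k] by (simp add: M_def W_def K_def)
  have DD: "opD P \<kappa> (opD P \<kappa> A) = (W * M (M A) - M A * M W) / W^3"
    using W by (simp add: D M_def Mop_divide field_simps power2_eq_square power3_eq_cube)
  have WQ: "W = 4 * Xv * Yv * Qg K" by (simp add: W_def Wg_def)
  define c where "c = 3 * W^3 * A^2"
  have c: "c \<noteq> 0" using W A by (simp add: c_def)
  have L: "(A * opD P \<kappa> (opD P \<kappa> A) - (opD P \<kappa> A)^2) / A^2 * c
       = 3 * (A * (W * M (M A) - M A * M W) - W * (M A)^2)"
    unfolding DD c_def using W A by (simp add: D field_simps power2_eq_square power3_eq_cube)
  have R: "(- cst (4 * p^2) / (3 * Xv * Yv * Qf \<kappa>) * (A - 1 / A^2)) * c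
       = - 16 * cst (p^2) * (A^3 - 1) * W^2"
    unfolding c_def Qf_Qg K_def[symmetric] WQ using Q A
    by (simp add: cst_mult field_simps power2_eq_square power3_eq_cube)
  have "pde P p \<kappa> A \<longleftrightarrow>
     (A * opD P \<kappa> (opD P \<kappa> A) - (opD P \<kappa> A)^2) / A^2 * c
       = (- cst (4 * p^2) / (3 * Xv * Yv * Qf \<kappa>) * (A - 1 / A^2)) * c"
    unfolding pde_def using c mult_cancel_right[of _ c] by (metis (no_types, lifting))
  also have "\<dots> \<longleftrightarrow> Eg K P (p^2) A = 0"
    unfolding L R Eg_def M_def W_def by (simp add: algebra_simps eq_neg_iff_add_eq_0)
  finally show ?thesis by (simp add: K_def)
qed

definition xo :: "ser \<Rightarrow> int \<Rightarrow> bool" where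
  "xo F n \<longleftrightarrow> (\<forall>a<n. F $$ a = 0)"

lemma xoD: "xo F n \<Longrightarrow> a < n \<Longrightarrow> F $$ a = 0" by (simp add: xo_def)

lemma xo_mono: "xo F n \<Longrightarrow> m \<le> n \<Longrightarrow> xo F m" by (simp add: xo_def)

lemma xo_mult: assumes "xo F n" "xo G m" "t \<le> n + m" shows "xo (F * G) t"
  unfolding xo_def
proof (intro allI impI)
  fix a assume "a < t"
  have "(F*G)$$a = (\<Sum>i=n..a-m. F$$i * G$$(a-i))"
    by (rule fls_times_nth_bounds) (use assms in \<open>auto simp: xo_def\<close>)
  also have "\<dots> = 0" using \<open>a < t\<close> assms(3) by simp
  finally show "(F*G)$$a = 0" .
qed

lemma xo_mult_nth: assumes "xo F n" "xo G m" shows "(F * G) $$ (n + m) = F $$ n * G $$ m"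
proof -
  have "(F*G)$$(n+m) = (\<Sum>i=n..n+m-m. F$$i * G$$(n+m-i))"
    by (rule fls_times_nth_bounds) (use assms in \<open>auto simp: xo_def\<close>)
  thus ?thesis by simp
qed

lemma xo_add: "xo F n \<Longrightarrow> xo G n \<Longrightarrow> xo (F + G) n" by (simp add: xo_def)
lemma xo_diff: "xo F n \<Longrightarrow> xo G n \<Longrightarrow> xo (F - G) n" by (simp add: xo_def)
lemma xo_uminus: "xo F n \<Longrightarrow> xo (- F) n" by (simp add: xo_def)
lemma xo_zero [simp]: "xo 0 n" by (simp add: xo_def)
lemma xo_cst [simp]: "xo (cst c) 0" by (simp add: xo_def cst_def)
lemma xo_one [simp]: "xo 1 0" by (simp add: xo_def)
lemma xo_numeral [simp]: "xo (numeral m) 0" using xo_cst[of "numeral m"] by simp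
lemma xo_Xv [simp]: "xo Xv 1" by (simp add: xo_def Xv_def)
lemma xo_Yv [simp]: "xo Yv 0" by (simp add: xo_def Yv_def)
lemma xo_power: "xo F 0 \<Longrightarrow> xo (F ^ j) 0"
  by (induction j) (auto intro: xo_mult)
lemma xo_thx: "xo F n \<Longrightarrow> xo (thx F) n"
  by (simp add: xo_def thx_def Xv_def fls_X_times_nth Dx_nth)
lemma xo_thy: "xo F n \<Longrightarrow> xo (thy F) n"
  by (simp add: xo_def thy_def Yv_def)

lemma xo_co: "xo F n \<longleftrightarrow> (\<forall>a b. a < n \<longrightarrow> co F a b = 0)"
  by (auto simp: xo_def co_def fls_eq_iff)

lemma xo_Mop: assumes "xo F n" shows "xo (Mop K P F) n"
  using assms unfolding xo_co by (simp add: co_Mop)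

lemma xo_Wg: "xo (Wg K) 1"
  unfolding xo_co by (simp add: co_Wg)

lemma xo_Mop_Wg: "xo (Mop K P (Wg K)) 2"
  unfolding xo_co by (auto simp: co_Mop co_Wg)

definition Lop :: "int \<Rightarrow> complex fls \<Rightarrow> complex fls" where
  "Lop k h = fls_X^2 * (of_int (3*k) * h - fls_X * fls_deriv h)"

lemma Lop_nth: "Lop k h $$ b = of_int (3*k - (b - 2)) * h $$ (b - 2)"
proof -
  have "Lop k h $$ b = (of_int (3*k) * h - fls_X * fls_deriv h) $$ (b + - int 2)"
    unfolding Lop_def fls_X_power_times_conv_shift fls_shift_nth by simp
  also have "\<dots> = of_int (3*k) * h $$ (b - 2) - of_int (b - 2) * h $$ (b - 2)"
    by (simp only: fls_minus_nth fls_mult_of_int_nth fls_X_times_nth fls_deriv_nth) simp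
  finally show ?thesis by (simp add: algebra_simps)
qed

lemma Mop_low: assumes "xo H k"
  shows "Mop K P H $$ k = fls_const (\<i>*P*K) * Lop k (H $$ k)"
proof (rule fls_eqI)
  fix b
  have "Mop K P H $$ k $$ b = co (Mop K P H) k b" by (simp add: co_def)
  also have "\<dots> = \<i>*P*K * of_int (3*k - (b - 2)) * co H k (b - 2)"
    using assms unfolding xo_co by (simp add: co_Mop)
  finally show "Mop K P H $$ k $$ b = (fls_const (\<i>*P*K) * Lop k (H $$ k)) $$ b"
    by (simp add: Lop_nth co_def)
qed

lemma xo_mult': "xo F n \<Longrightarrow> xo G m \<Longrightarrow> xo (F * G) (n + m)"
  by (rule xo_mult) auto

lemma Wg_nth1: "Wg K $$ 1 = fls_const (4*K) * fls_X^3"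
proof (rule fls_eqI)
  fix b show "Wg K $$ 1 $$ b = (fls_const (4*K) * fls_X^3) $$ b"
    using co_Wg[of K 1 b] by (simp add: co_def)
qed

lemma Lop_const: "Lop k (fls_const c * h) = fls_const c * Lop k h"
  by (simp add: Lop_def algebra_simps)
lemma Lop_diff: "Lop k (h - g) = Lop k h - Lop k g"
  by (simp add: Lop_def algebra_simps)

definition Lin :: "complex \<Rightarrow> complex \<Rightarrow> complex \<Rightarrow> int \<Rightarrow> complex fls \<Rightarrow> complex fls" where
  "Lin K P q k h = fls_const (12*q*K*(\<i>*P*K)^2) * (fls_X^3 * Lop k (Lop k h))"

lemma Eg_lin:
  assumes A0: "xo A 0" and Aq: "xo (A - cst q) 1" and xH: "xo H k" and k: "1 \<le> k"
  shows "xo (Eg K P p2 (A + H) - Eg K P p2 A) (k+1)"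
    and "(Eg K P p2 (A + H) - Eg K P p2 A) $$ (k+1) = Lin K P q k (H $$ k)"
proof -
  define W where "W = Wg K"
  define a where "a = Mop K P A"
  define h where "h = Mop K P H"
  define aa where "aa = Mop K P a"
  define hh where "hh = Mop K P h"
  define w where "w = Mop K P W"
  define R where "R = 3*(H*W*aa + (A - cst q)*W*hh + H*W*hh - H*a*w - A*h*w - H*h*w - 2*W*a*h - W*(h*h))
     + 16*cst p2*(3*A^2*H + 3*A*(H*H) + H*(H*H))*(W*W)"
  have exp: "Eg K P p2 (A + H) - Eg K P p2 A = 3*cst q*(W*hh) + R"
    unfolding Eg_def R_def a_def h_def aa_def hh_def w_def W_def
    by (simp add: algebra_simps power2_eq_square power3_eq_cube)
  have xW: "xo W 1" by (simp add: W_def xo_Wg)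
  have xw: "xo w 2" by (simp add: w_def W_def xo_Mop_Wg)
  have xa: "xo a 1" using xo_Mop[OF Aq, of K P] by (simp add: a_def)
  have xaa: "xo aa 1" using xa by (simp add: aa_def xo_Mop)
  have xh: "xo h k" using xH by (simp add: h_def xo_Mop)
  have xhh: "xo hh k" using xh by (simp add: hh_def xo_Mop)
  have xA2: "xo (A^2) 0" using A0 by (rule xo_power)
  have x3: "xo (3::ser) 0" by simp
  have x2: "xo (2::ser) 0" by simp
  have x16: "xo (16::ser) 0" by simp
  have xp: "xo (cst p2) 0" by simp
  have xq: "xo (cst q) 0" by simp
  have t1: "xo (H*W*aa) (k+2)" using xo_mult'[OF xo_mult'[OF xH xW] xaa] by (rule xo_mono) simp
  have t2: "xo ((A - cst q)*W*hh) (k+2)" using xo_mult'[OF xo_mult'[OF Aq xW] xhh] by (rule xo_mono) simp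
  have t3: "xo (H*W*hh) (k+2)" using xo_mult'[OF xo_mult'[OF xH xW] xhh] by (rule xo_mono) (use k in simp)
  have t4: "xo (H*a*w) (k+2)" using xo_mult'[OF xo_mult'[OF xH xa] xw] by (rule xo_mono) simp
  have t5: "xo (A*h*w) (k+2)" using xo_mult'[OF xo_mult'[OF A0 xh] xw] by (rule xo_mono) simp
  have t6: "xo (H*h*w) (k+2)" using xo_mult'[OF xo_mult'[OF xH xh] xw] by (rule xo_mono) (use k in simp)
  have t7: "xo (2*W*a*h) (k+2)" using xo_mult'[OF xo_mult'[OF xo_mult'[OF x2 xW] xa] xh] by (rule xo_mono) simp
  have t8: "xo (W*(h*h)) (k+2)" using xo_mult'[OF xW xo_mult'[OF xh xh]] by (rule xo_mono) (use k in simp)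
  have s1: "xo (3*A^2*H) k" using xo_mult'[OF xo_mult'[OF x3 xA2] xH] by (rule xo_mono) simp
  have s2: "xo (3*A*(H*H)) k" using xo_mult'[OF xo_mult'[OF x3 A0] xo_mult'[OF xH xH]] by (rule xo_mono) (use k in simp)
  have s3: "xo (H*(H*H)) k" using xo_mult'[OF xH xo_mult'[OF xH xH]] by (rule xo_mono) (use k in simp)
  have s: "xo (3*A^2*H + 3*A*(H*H) + H*(H*H)) k" using s1 s2 s3 by (intro xo_add)
  have t9: "xo (16*cst p2*(3*A^2*H + 3*A*(H*H) + H*(H*H))*(W*W)) (k+2)"
    using xo_mult'[OF xo_mult'[OF xo_mult'[OF x16 xp] s] xo_mult'[OF xW xW]]
    by (rule xo_mono) simp
  have xR: "xo R (k+2)"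
    unfolding R_def
    by (intro xo_add xo_diff t9 xo_mono[OF xo_mult'[OF x3 _]]) (use t1 t2 t3 t4 t5 t6 t7 t8 in \<open>auto intro!: xo_add xo_diff\<close>)
  have xm: "xo (3*cst q*(W*hh)) (k+1)"
    using xo_mult'[OF xo_mult'[OF x3 xq] xo_mult'[OF xW xhh]] by (rule xo_mono) simp
  show "xo (Eg K P p2 (A + H) - Eg K P p2 A) (k+1)"
    unfolding exp by (rule xo_add[OF xm xo_mono[OF xR]]) simp
  have R1: "R $$ (k+1) = 0" using xR by (simp add: xo_def)
  have "hh $$ k = fls_const (\<i>*P*K) * Lop k (fls_const (\<i>*P*K) * Lop k (H $$ k))"
    unfolding hh_def using Mop_low[OF xh] Mop_low[OF xH] by (simp add: h_def)
  hence hhk: "hh $$ k = fls_const ((\<i>*P*K)^2) * Lop k (Lop k (H $$ k))"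
    by (simp add: Lop_const power2_eq_square)
  have "(W*hh) $$ (1 + k) = W $$ 1 * hh $$ k" by (rule xo_mult_nth[OF xW xhh])
  hence "(W*hh) $$ (k+1) = fls_const (4*K) * fls_X^3 * (fls_const ((\<i>*P*K)^2) * Lop k (Lop k (H $$ k)))"
    by (simp add: W_def Wg_nth1 hhk add.commute)
  moreover have "(3*cst q*(W*hh)) $$ (k+1) = 3 * (fls_const q * ((W*hh) $$ (k+1)))"
    by (simp add: cst_def mult.assoc)
  moreover have c: "fls_const (12*q*K*(\<i>*P*K)^2) = fls_const 3 * fls_const q * fls_const (4*K) * fls_const ((\<i>*P*K)^2)"
    by (simp only: fls_const_mult_const) (rule arg_cong[where f=fls_const], simp add: algebra_simps)
  ultimately have "(3*cst q*(W*hh)) $$ (k+1) = Lin K P q k (H $$ k)"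
    unfolding Lin_def c by (simp only: fls_const_numeral) (simp add: algebra_simps)
  thus "(Eg K P p2 (A + H) - Eg K P p2 A) $$ (k+1) = Lin K P q k (H $$ k)"
    unfolding exp using R1 by simp
qed

lemma fls_mult_nonzero_term:
  fixes f g :: "'a::comm_ring_1 fls"
  assumes "(f * g) $$ n \<noteq> 0" shows "\<exists>i. f $$ i * g $$ (n - i) \<noteq> 0"
proof (rule ccontr)
  assume "\<not> ?thesis"
  hence "(f*g) $$ n = 0" by (simp add: fls_times_nth(2))
  with assms show False by simp
qed

lemma co_mult_nonzero:
  assumes "co (F * G) a b \<noteq> 0"
  shows "\<exists>i j. co F i j \<noteq> 0 \<and> co G (a - i) (b - j) \<noteq> 0"
proof -
  from assms have "((F * G) $$ a) $$ b \<noteq> 0" by (simp add: co_def)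
  hence "(F * G) $$ a \<noteq> 0" by auto
  have "(F*G) $$ a = (\<Sum>i=fls_subdegree F..a - fls_subdegree G. F$$i * G$$(a-i))"
    by (rule fls_times_nth(2))
  with \<open>((F * G) $$ a) $$ b \<noteq> 0\<close> obtain i where i: "(F$$i * G$$(a-i)) $$ b \<noteq> 0"
    by (metis (no_types, lifting) fls_nth_sum sum.neutral)
  then obtain j where "F$$i$$j * G$$(a-i)$$(b-j) \<noteq> 0" using fls_mult_nonzero_term by blast
  thus ?thesis by (auto simp: co_def)
qed

definition spp :: "ser \<Rightarrow> int \<Rightarrow> int \<Rightarrow> bool" where
  "spp F d g \<longleftrightarrow> (\<forall>a b. co F a b \<noteq> 0 \<longrightarrow> 0 \<le> a \<and> d \<le> a + b \<and> b - 3*a \<le> g \<and> even (a + b))"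

lemma sppD: "spp F d g \<Longrightarrow> co F a b \<noteq> 0 \<Longrightarrow> 0 \<le> a \<and> d \<le> a + b \<and> b - 3*a \<le> g \<and> even (a + b)"
  by (simp add: spp_def)

lemma spp_mono: "spp F d g \<Longrightarrow> d' \<le> d \<Longrightarrow> g \<le> g' \<Longrightarrow> spp F d' g'"
  unfolding spp_def by force

lemma spp_add: "spp F d g \<Longrightarrow> spp G d g \<Longrightarrow> spp (F + G) d g"
  unfolding spp_def by (metis add.right_neutral add_0 co_add)
lemma spp_diff: "spp F d g \<Longrightarrow> spp G d g \<Longrightarrow> spp (F - G) d g"
  unfolding spp_def by (metis co_diff diff_0 diff_0_right)
lemma spp_zero [simp]: "spp 0 d g" by (simp add: spp_def)
lemma spp_cst [simp]: "spp (cst c) 0 0" by (simp add: spp_def)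
lemma spp_one [simp]: "spp 1 0 0" by (simp add: spp_def)
lemma spp_numeral [simp]: "spp (numeral n) 0 0" using spp_cst[of "numeral n"] by simp

lemma spp_mult: assumes "spp F d1 g1" "spp G d2 g2" shows "spp (F * G) (d1 + d2) (g1 + g2)"
  unfolding spp_def
proof (intro allI impI)
  fix a b assume "co (F * G) a b \<noteq> 0"
  then obtain i j where "co F i j \<noteq> 0" "co G (a - i) (b - j) \<noteq> 0" by (blast dest: co_mult_nonzero)
  from sppD[OF assms(1) this(1)] sppD[OF assms(2) this(2)]
  show "0 \<le> a \<and> d1 + d2 \<le> a + b \<and> b - 3 * a \<le> g1 + g2 \<and> even (a + b)"
    by (auto elim!: evenE; presburger)
qed

lemma spp_power: "spp F 0 0 \<Longrightarrow> spp (F ^ n) 0 0"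
  by (induction n) (auto dest: spp_mult)

lemma spp_Wg: "spp (Wg K) 4 0"
  by (auto simp: spp_def co_Wg)

lemma spp_Mop: assumes "spp F d 0" shows "spp (Mop K P F) (d + 2) 0"
  unfolding spp_def
proof (intro allI impI)
  fix a b assume nz: "co (Mop K P F) a b \<noteq> 0"
  have S: "\<And>i j. co F i j \<noteq> 0 \<Longrightarrow> 0 \<le> i \<and> d \<le> i + j \<and> j - 3*i \<le> 0 \<and> even (i + j)"
    using assms by (simp add: spp_def)
  show "0 \<le> a \<and> d + 2 \<le> a + b \<and> b - 3 * a \<le> 0 \<and> even (a + b)"
  proof (cases "co F (a - 1) (b - 3) \<noteq> 0 \<or> co F (a - 2) (b - 2) \<noteq> 0 \<or> co F (a - 3) (b - 1) \<noteq> 0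
      \<or> co F (a - 1) (b - 1) \<noteq> 0 \<or> co F (a - 2) b \<noteq> 0")
    case True
    thus ?thesis
    proof (elim disjE)
      assume "co F (a - 1) (b - 3) \<noteq> 0" from S[OF this] show ?thesis by (auto elim!: evenE; presburger)
    next
      assume "co F (a - 2) (b - 2) \<noteq> 0" from S[OF this] show ?thesis by (auto elim!: evenE; presburger)
    next
      assume "co F (a - 3) (b - 1) \<noteq> 0" from S[OF this] show ?thesis by (auto elim!: evenE; presburger)
    next
      assume "co F (a - 1) (b - 1) \<noteq> 0" from S[OF this] show ?thesis by (auto elim!: evenE; presburger)
    next
      assume "co F (a - 2) b \<noteq> 0" from S[OF this] show ?thesis by (auto elim!: evenE; presburger)
    qed
  next
    case False
    with nz have nz2: "of_int (3*a - (b - 2)) * co F a (b - 2) \<noteq> 0"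
      by (auto simp: co_Mop)
    hence c: "co F a (b - 2) \<noteq> 0" by auto
    have "(of_int (3*a - (b - 2)) :: complex) \<noteq> 0" using nz2 by auto
    hence ne: "3*a \<noteq> b - 2" by (metis diff_self of_int_0)
    from S[OF c] ne show ?thesis by (auto elim!: evenE; presburger)
  qed
qed

lemma spp_xo: "spp F d g \<Longrightarrow> xo F 0"
  unfolding xo_co spp_def by force

lemma spp_Eg: assumes "spp A 0 0" shows "spp (Eg K P p2 A) 8 0"
proof -
  have W: "spp (Wg K) 4 0" by (rule spp_Wg)
  have a: "spp (Mop K P A) 2 0" using spp_Mop[OF assms] by simp
  have aa: "spp (Mop K P (Mop K P A)) 4 0" using spp_Mop[OF a] by simp
  have w: "spp (Mop K P (Wg K)) 6 0" using spp_Mop[OF W] by simp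
  have x1: "spp (Wg K * Mop K P (Mop K P A)) 8 0" using spp_mult[OF W aa] by simp
  have x2: "spp (Mop K P A * Mop K P (Wg K)) 8 0" using spp_mult[OF a w] by simp
  have t1: "spp (A * (Wg K * Mop K P (Mop K P A) - Mop K P A * Mop K P (Wg K))) 8 0"
    using spp_mult[OF assms spp_diff[OF x1 x2]] by simp
  have t2: "spp (Wg K * (Mop K P A)^2) 8 0"
    using spp_mult[OF W spp_mult[OF a a]] by (simp add: power2_eq_square)
  have t3: "spp (A^3 - 1) 0 0" by (rule spp_diff[OF spp_power[OF assms]]) simp
  have t4: "spp (16 * cst p2 * (A^3 - 1) * (Wg K)^2) 8 0"
    using spp_mult[OF spp_mult[OF spp_mult[OF spp_numeral spp_cst] t3] spp_mult[OF W W]]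
    by (simp add: power2_eq_square)
  have "spp (3 * (A * (Wg K * Mop K P (Mop K P A) - Mop K P A * Mop K P (Wg K))
      - Wg K * (Mop K P A)^2)) 8 0"
    using spp_mult[OF spp_numeral spp_diff[OF t1 t2]] by simp
  thus ?thesis unfolding Eg_def using t4 by (rule spp_add)
qed

definition lam :: "complex \<Rightarrow> complex \<Rightarrow> complex \<Rightarrow> int \<Rightarrow> int \<Rightarrow> complex" where
  "lam K P q k s = 12*q*K*(\<i>*P*K)^2 * of_int ((3*k - s - 2) * (3*k - s))"

lemma Lin_nth: "Lin K P q k h $$ j = lam K P q k (j - 7) * h $$ (j - 7)"
proof -
  have "Lin K P q k h $$ j = 12*q*K*(\<i>*P*K)^2 * (Lop k (Lop k h)) $$ (j + - int 3)"
    unfolding Lin_def fls_mult_const_nth fls_X_power_times_conv_shift fls_shift_nth by simp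
  also have "\<dots> = 12*q*K*(\<i>*P*K)^2 * (of_int (3*k - (j - 3 - 2)) * (of_int (3*k - (j - 5 - 2)) * h $$ (j - 7)))"
    by (simp add: Lop_nth algebra_simps)
  finally show ?thesis by (simp add: lam_def algebra_simps)
qed

lemma lam_nz: assumes "q \<noteq> 0" "K \<noteq> 0" "P \<noteq> 0" "s \<noteq> 3*k" "s \<noteq> 3*k - 2"
  shows "lam K P q k s \<noteq> 0"
proof -
  have h: "(of_int ((3*k - s - 2) * (3*k - s)) :: complex) \<noteq> 0"
    by (simp only: of_int_eq_0_iff) (use assms in auto)
  have C: "12*q*K*(\<i>*P*K)^2 \<noteq> 0" using assms by simp
  show ?thesis unfolding lam_def using C h by (metis mult_eq_0_iff)
qed

definition bk :: "complex \<Rightarrow> complex \<Rightarrow> complex \<Rightarrow> complex \<Rightarrow> (nat \<Rightarrow> complex) \<Rightarrow> nat \<Rightarrow> ser \<Rightarrow> int \<Rightarrow> complex" where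
  "bk K P p2 q c k A s = (if s = 3 * int k then c (2*k) else if s = 3 * int k - 2 then c (2*k - 1)
     else if - int k \<le> s \<and> s \<le> 3 * int k then - co (Eg K P p2 A) (int k + 1) (s + 7) / lam K P q (int k) s
     else 0)"

definition Bfn :: "complex \<Rightarrow> complex \<Rightarrow> complex \<Rightarrow> complex \<Rightarrow> (nat \<Rightarrow> complex) \<Rightarrow> nat \<Rightarrow> ser \<Rightarrow> complex fls" where
  "Bfn K P p2 q c k A = Abs_fls (bk K P p2 q c k A)"

lemma Bfn_nth: "Bfn K P p2 q c k A $$ s = bk K P p2 q c k A s"
  unfolding Bfn_def by (rule nth_Abs_fls_lower_bound[of "- int k - 2"]) (simp add: bk_def)

definition Hm :: "nat \<Rightarrow> complex fls \<Rightarrow> ser" where "Hm n b = Xv^n * fls_const b"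

lemma Hk_nth: "Hm n b $$ a = (if a = int n then b else 0)"
  unfolding Hm_def Xv_def fls_X_power_times_conv_shift fls_shift_nth by simp

lemma co_Hk: "co (Hm n b) a j = (if a = int n then b $$ j else 0)"
  unfolding co_def Hk_nth by simp

fun Aseq :: "complex \<Rightarrow> complex \<Rightarrow> complex \<Rightarrow> complex \<Rightarrow> (nat \<Rightarrow> complex) \<Rightarrow> nat \<Rightarrow> ser" where
  "Aseq K P p2 q c 0 = cst q"
| "Aseq K P p2 q c (Suc k) = Aseq K P p2 q c k
     + Hm (Suc k) (Bfn K P p2 q c (Suc k) (Aseq K P p2 q c k))"

definition sol :: "complex \<Rightarrow> complex \<Rightarrow> complex \<Rightarrow> complex \<Rightarrow> (nat \<Rightarrow> complex) \<Rightarrow> nat \<Rightarrow> complex fls" where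
  "sol K P p2 q c k = Aseq K P p2 q c k $$ int k"


lemma Aseq_out: "a < 0 \<or> int k < a \<Longrightarrow> Aseq K P p2 q c k $$ a = 0"
  by (induction k) (auto simp: cst_def Hk_nth)

lemma Aseq_stable: "j \<le> k \<Longrightarrow> Aseq K P p2 q c k $$ int j = Aseq K P p2 q c j $$ int j"
proof (induction k)
  case 0 thus ?case by simp
next
  case (Suc k)
  show ?case
  proof (cases "j = Suc k")
    case False
    with Suc have "j \<le> k" by simp
    thus ?thesis using Suc by (simp add: Hk_nth)
  qed simp
qed

lemma Aseq_nth: "Aseq K P p2 q c k $$ a = (if 0 \<le> a \<and> a \<le> int k then sol K P p2 q c (nat a) else 0)"
proof (cases "0 \<le> a \<and> a \<le> int k")
  case True
  hence "a = int (nat a)" "nat a \<le> k" by auto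
  thus ?thesis using True Aseq_stable[of "nat a" k K P p2 q c] by (simp add: sol_def)
qed (auto simp: Aseq_out)

lemma sol_0: "sol K P p2 q c 0 = fls_const q"
  by (simp add: sol_def cst_def)

lemma sol_Suc: "sol K P p2 q c (Suc k) = Bfn K P p2 q c (Suc k) (Aseq K P p2 q c k)"
  by (simp add: sol_def Hk_nth Aseq_out)

lemma sol_nth: "1 \<le> k \<Longrightarrow> sol K P p2 q c k $$ s = bk K P p2 q c k (Aseq K P p2 q c (k - 1)) s"
  by (cases k) (auto simp: sol_Suc Bfn_nth)

lemma xo_Aseq: "xo (Aseq K P p2 q c k) 0"
  by (simp add: xo_def Aseq_out)

lemma xo_Aseq_q: "xo (Aseq K P p2 q c k - cst q) 1"
  unfolding xo_def
proof (intro allI impI)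
  fix a :: int assume "a < 1"
  thus "(Aseq K P p2 q c k - cst q) $$ a = 0"
    by (cases "a = 0") (auto simp: Aseq_nth sol_0 cst_def)
qed

lemma xo_Hk: "xo (Hm n b) (int n)"
  by (simp add: xo_def Hk_nth)

lemma spp_Aseq: "spp (Aseq K P p2 q c k) 0 0"
proof (induction k)
  case 0 thus ?case by simp
next
  case (Suc k)
  define A where "A = Aseq K P p2 q c k"
  have E: "spp (Eg K P p2 A) 8 0" using spp_Eg Suc by (simp add: A_def)
  have "spp (Hm (Suc k) (Bfn K P p2 q c (Suc k) A)) 0 0"
    unfolding spp_def
  proof (intro allI impI)
    fix a b assume nz: "co (Hm (Suc k) (Bfn K P p2 q c (Suc k) A)) a b \<noteq> 0"
    hence a: "a = int (Suc k)" and bn: "bk K P p2 q c (Suc k) A b \<noteq> 0"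
      by (auto simp: co_Hk Bfn_nth split: if_splits)
    show "0 \<le> a \<and> 0 \<le> a + b \<and> b - 3 * a \<le> 0 \<and> even (a + b)"
    proof (cases "b = 3 * int (Suc k) \<or> b = 3 * int (Suc k) - 2")
      case True thus ?thesis using a by (auto; presburger)
    next
      case False
      with bn have r: "- int (Suc k) \<le> b \<and> b \<le> 3 * int (Suc k)" and
        c: "co (Eg K P p2 A) (int (Suc k) + 1) (b + 7) \<noteq> 0"
        by (auto simp: bk_def split: if_splits)
      from sppD[OF E c] r a show ?thesis by (auto elim!: evenE; presburger)
    qed
  qed
  thus ?case using Suc by (simp add: spp_add A_def)
qed

lemma Mop_zero [simp]: "Mop K P 0 = 0" using Mop_cst[of K P 0] by simp

lemma Eg_cst: "Eg K P p2 (cst q) = 16 * cst p2 * (cst q ^ 3 - 1) * (Wg K)^2"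
  by (simp add: Eg_def)

lemma Eg_Aseq_zero:
  assumes q: "q \<noteq> 0" and K: "K \<noteq> 0" and P: "P \<noteq> 0"
  shows "a \<le> int k + 1 \<Longrightarrow> Eg K P p2 (Aseq K P p2 q c k) $$ a = 0"
proof (induction k arbitrary: a)
  case 0
  have x1: "xo (16 * cst p2 * (cst q ^ 3 - 1)) (0 + 0 + 0)"
    using xo_mult'[OF xo_mult'[OF xo_numeral xo_cst] xo_diff[OF xo_power[OF xo_cst] xo_one]] .
  have "xo (16 * cst p2 * (cst q ^ 3 - 1) * (Wg K * Wg K)) (0 + 0 + 0 + (1 + 1))"
    using xo_mult'[OF x1 xo_mult'[OF xo_Wg xo_Wg]] .
  hence "xo (16 * cst p2 * (cst q ^ 3 - 1) * (Wg K)^2) 2" by (simp add: power2_eq_square)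
  thus ?case using 0 by (simp add: Eg_cst xo_def)
next
  case (Suc k)
  define A where "A = Aseq K P p2 q c k"
  define b where "b = Bfn K P p2 q c (Suc k) A"
  define H where "H = Hm (Suc k) b"
  have AH: "Aseq K P p2 q c (Suc k) = A + H" by (simp add: A_def H_def b_def)
  have xH: "xo H (int (Suc k))" unfolding H_def by (rule xo_Hk)
  have L1: "xo (Eg K P p2 (A + H) - Eg K P p2 A) (int (Suc k) + 1)"
    and L2: "(Eg K P p2 (A + H) - Eg K P p2 A) $$ (int (Suc k) + 1) = Lin K P q (int (Suc k)) (H $$ int (Suc k))"
    using Eg_lin[OF xo_Aseq xo_Aseq_q xH, of K P p2] by (auto simp: A_def)
  have IH: "\<And>a. a \<le> int k + 1 \<Longrightarrow> Eg K P p2 A $$ a = 0" using Suc.IH by (simp add: A_def)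
  have Hk: "H $$ int (Suc k) = b" by (simp add: H_def Hk_nth)
  show ?case
  proof (cases "a \<le> int k + 1")
    case True
    have "(Eg K P p2 (A + H) - Eg K P p2 A) $$ a = 0" using L1 True by (simp add: xo_def)
    thus ?thesis unfolding AH using IH[OF True] by simp
  next
    case False
    hence a: "a = int (Suc k) + 1" using Suc.prems by simp
    have E: "spp (Eg K P p2 A) 8 0" using spp_Eg spp_Aseq by (simp add: A_def)
    have "Eg K P p2 (A + H) $$ a = Eg K P p2 A $$ a + Lin K P q (int (Suc k)) b"
      using L2 a Hk by (simp add: algebra_simps)
    also have "\<dots> = 0"
    proof (rule fls_eqI)
      fix j :: int
      define s where "s = j - 7"
      have j: "j = s + 7" by (simp add: s_def)
      have bs: "b $$ s = bk K P p2 q c (Suc k) A s" by (simp add: b_def Bfn_nth)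
      have "co (Eg K P p2 A) a j + lam K P q (int (Suc k)) s * b $$ s = 0"
      proof (cases "s = 3 * int (Suc k) \<or> s = 3 * int (Suc k) - 2")
        case True
        have "co (Eg K P p2 A) a j = 0"
        proof (rule ccontr)
          assume "co (Eg K P p2 A) a j \<noteq> 0"
          from sppD[OF E this] True a j show False by auto
        qed
        moreover have "lam K P q (int (Suc k)) s = 0" using True by (auto simp: lam_def)
        ultimately show ?thesis by simp
      next
        case False
        show ?thesis
        proof (cases "- int (Suc k) \<le> s \<and> s \<le> 3 * int (Suc k)")
          case True
          have "lam K P q (int (Suc k)) s \<noteq> 0" using False q K P by (intro lam_nz) auto
          thus ?thesis using True False by (simp add: bs bk_def a j)
        next
          case out: False
          have "co (Eg K P p2 A) a j = 0"
          proof (rule ccontr)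
            assume "co (Eg K P p2 A) a j \<noteq> 0"
            from sppD[OF E this] out a j show False by auto
          qed
          thus ?thesis using out False by (auto simp: bs bk_def)
        qed
      qed
      thus "(Eg K P p2 A $$ a + Lin K P q (int (Suc k)) b) $$ j = 0 $$ j"
        by (simp add: Lin_nth co_def s_def)
    qed
    finally show ?thesis unfolding AH .
  qed
qed

lemma series_nth: "series B $$ n = (if n < 0 then 0 else B (nat n))"
  by (simp add: series_def)

lemma rational_bounded:
  assumes "\<And>n. f $$ n \<noteq> 0 \<Longrightarrow> - int N \<le> n \<and> n \<le> int M"
  shows "rational_y f"
proof -
  define L where "L = N + M + 1"
  define a where "a = Poly (map (\<lambda>i. f $$ (int i - int N)) [0..<L])"
  have X: "fps_to_fls (fps_of_poly (monom (1::complex) N)) = fls_X ^ N"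
    by (rule fls_eqI) (auto simp: coeff_monom)
  have "fps_to_fls (fps_of_poly (monom 1 N)) * f = fps_to_fls (fps_of_poly a)"
  proof (rule fls_eqI)
    fix n :: int
    have lhs: "(fps_to_fls (fps_of_poly (monom 1 N)) * f) $$ n = f $$ (n - int N)"
      unfolding X fls_X_power_times_conv_shift fls_shift_nth by simp
    show "(fps_to_fls (fps_of_poly (monom 1 N)) * f) $$ n = fps_to_fls (fps_of_poly a) $$ n"
    proof (cases "n < 0")
      case True
      hence "f $$ (n - int N) = 0" using assms[of "n - int N"] by auto
      thus ?thesis using True lhs by simp
    next
      case nn: False
      show ?thesis
      proof (cases "nat n < L")
        case True
        thus ?thesis using nn lhs by (simp add: a_def nth_default_def)
      next
        case f2: False
        hence "int (Suc (N+M)) \<le> int (nat n)" using nn by (simp add: L_def)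
        hence "n - int N > int M" using nn by simp
        hence "f $$ (n - int N) = 0" using assms[of "n - int N"] by force
        thus ?thesis using nn f2 lhs by (simp add: a_def nth_default_def)
      qed
    qed
  qed
  moreover have "monom (1::complex) N \<noteq> 0" by simp
  ultimately show ?thesis unfolding rational_y_def by blast
qed

lemma sol_norm:
  assumes "1 \<le> k"
  shows "sol K P p2 q c k $$ (3 * int k) = c (2*k)"
    and "sol K P p2 q c k $$ (3 * int k - 2) = c (2*k - 1)"
  using assms by (simp_all add: sol_nth bk_def)

lemma sol_support:
  assumes "sol K P p2 q c k $$ s \<noteq> 0"
  shows "- int k \<le> s \<and> s \<le> 3 * int k \<and> even (int k + s)"
proof -
  have "co (Aseq K P p2 q c k) (int k) s \<noteq> 0" using assms by (simp add: co_def Aseq_nth)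
  from sppD[OF spp_Aseq this] show ?thesis by auto
qed

lemma sol_rational: "rational_y (sol K P p2 q c k)"
  by (rule rational_bounded[of _ k "3*k"]) (use sol_support in force)

lemma series_sol_Aseq: "xo (series (sol K P p2 q c) - Aseq K P p2 q c k) (int k + 1)"
  by (auto simp: xo_def series_nth Aseq_nth)

lemma Eg_series_sol:
  assumes q: "q \<noteq> 0" and K: "K \<noteq> 0" and P: "P \<noteq> 0"
  shows "Eg K P p2 (series (sol K P p2 q c)) = 0"
proof (rule fls_eqI)
  fix a :: int
  define k where "k = nat a"
  define A where "A = Aseq K P p2 q c k"
  define H where "H = series (sol K P p2 q c) - A"
  have xH: "xo H (int k + 1)" by (simp add: H_def A_def series_sol_Aseq)
  have "xo (Eg K P p2 (A + H) - Eg K P p2 A) (int k + 1 + 1)"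
    using Eg_lin(1)[OF xo_Aseq xo_Aseq_q xH] by (simp add: A_def)
  hence "(Eg K P p2 (A + H) - Eg K P p2 A) $$ a = 0" by (rule xoD) (simp add: k_def)
  moreover have "Eg K P p2 A $$ a = 0"
    unfolding A_def by (rule Eg_Aseq_zero[OF q K P]) (simp add: k_def)
  ultimately show "Eg K P p2 (series (sol K P p2 q c)) $$ a = 0 $$ a"
    by (simp add: H_def)
qed

theorem sol_exists:
  assumes k: "\<kappa> \<noteq> 0" and P: "P \<noteq> 0" and q: "q \<noteq> 0"
  shows "formal_solution P p \<kappa> (sol (\<kappa>^2) P (p^2) q c)"
proof -
  have A: "series (sol (\<kappa>^2) P (p^2) q c) \<noteq> 0"
  proof
    assume "series (sol (\<kappa>^2) P (p^2) q c) = 0"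
    hence "series (sol (\<kappa>^2) P (p^2) q c) $$ 0 = 0" by simp
    thus False using q by (simp add: series_nth sol_0)
  qed
  have "Eg (\<kappa>^2) P (p^2) (series (sol (\<kappa>^2) P (p^2) q c)) = 0"
    by (rule Eg_series_sol) (use k P q in auto)
  hence "pde P p \<kappa> (series (sol (\<kappa>^2) P (p^2) q c))" using pde_iff_Eg[OF k A] by simp
  thus ?thesis by (simp add: formal_solution_def sol_rational)
qed

lemma Lin_inj:
  assumes q: "q \<noteq> 0" and K: "K \<noteq> 0" and P: "P \<noteq> 0" and "1 \<le> k"
    and L: "Lin K P q (int k) f = Lin K P q (int k) g"
    and n1: "f $$ (3 * int k) = g $$ (3 * int k)" and n2: "f $$ (3 * int k - 2) = g $$ (3 * int k - 2)"
  shows "f = g"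
proof (rule fls_eqI)
  fix s :: int
  show "f $$ s = g $$ s"
  proof (cases "s = 3 * int k \<or> s = 3 * int k - 2")
    case True thus ?thesis using n1 n2 by auto
  next
    case False
    have "lam K P q (int k) s \<noteq> 0" using False q K P by (intro lam_nz) auto
    moreover have "lam K P q (int k) s * f $$ s = lam K P q (int k) s * g $$ s"
      using arg_cong[OF L, of "\<lambda>h. h $$ (s + 7)"] by (simp add: Lin_nth)
    ultimately show ?thesis by simp
  qed
qed

theorem sol_unique:
  assumes k: "\<kappa> \<noteq> 0" and P: "P \<noteq> 0" and q: "q \<noteq> 0"
    and pde: "pde P p \<kappa> (series B)" and B0: "B 0 = fls_const q"
    and norm: "\<forall>k\<ge>1. B k $$ (3 * int k) = c (2*k) \<and> B k $$ (3 * int k - 2) = c (2*k - 1)"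
  shows "B n = sol (\<kappa>^2) P (p^2) q c n"
proof (induction n rule: less_induct)
  case (less n)
  define K where "K = \<kappa>^2"
  define p2 where "p2 = p^2"
  have K: "K \<noteq> 0" using k by (simp add: K_def)
  have A: "series B \<noteq> 0"
  proof
    assume "series B = 0"
    hence "series B $$ 0 = 0" by simp
    thus False using q B0 by (simp add: series_nth)
  qed
  have EA: "Eg K P p2 (series B) = 0" using pde pde_iff_Eg[OF k A] by (simp add: K_def p2_def)
  show ?case
  proof (cases "n = 0")
    case True thus ?thesis using B0 by (simp add: sol_0)
  next
    case False
    hence n1: "1 \<le> n" by simp
    define T where "T = Aseq K P p2 q c (n - 1)"
    define H where "H = series B - T"
    define H' where "H' = Aseq K P p2 q c n - T"
    have xH: "xo H (int n)"
      unfolding xo_def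
    proof (intro allI impI)
      fix a :: int assume a: "a < int n"
      show "H $$ a = 0"
      proof (cases "a < 0")
        case True thus ?thesis by (simp add: H_def T_def series_nth Aseq_out)
      next
        case False
        hence "nat a < n" "a \<le> int (n - 1)" using a by auto
        thus ?thesis using False less.IH[of "nat a"] by (simp add: H_def T_def series_nth Aseq_nth K_def p2_def)
      qed
    qed
    have xH': "xo H' (int n)"
      by (auto simp: xo_def H'_def T_def Aseq_nth)
    have n1': "1 \<le> int n" using n1 by simp
    have e1: "(Eg K P p2 (T + H) - Eg K P p2 T) $$ (int n + 1) = Lin K P q (int n) (H $$ int n)"
      using Eg_lin(2)[OF xo_Aseq xo_Aseq_q xH n1'] by (simp add: T_def)
    have e2: "(Eg K P p2 (T + H') - Eg K P p2 T) $$ (int n + 1) = Lin K P q (int n) (H' $$ int n)"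
      using Eg_lin(2)[OF xo_Aseq xo_Aseq_q xH' n1'] by (simp add: T_def)
    have z2: "Eg K P p2 (T + H') $$ (int n + 1) = 0"
      unfolding H'_def by simp (rule Eg_Aseq_zero[OF q K P], simp)
    have Tn: "T $$ int n = 0" unfolding T_def by (rule Aseq_out) (use n1 in simp)
    have Hn: "H $$ int n = B n" using Tn by (simp add: H_def series_nth)
    have H'n: "H' $$ int n = sol K P p2 q c n" using Tn by (simp add: H'_def sol_def)
    have "T + H = series B" by (simp add: H_def)
    hence "Lin K P q (int n) (B n) = Lin K P q (int n) (sol K P p2 q c n)"
      using e1 e2 z2 EA Hn H'n by simp
    moreover have "B n $$ (3 * int n) = sol K P p2 q c n $$ (3 * int n)"
      using norm n1 sol_norm(1)[OF n1] by simp
    moreover have "B n $$ (3 * int n - 2) = sol K P p2 q c n $$ (3 * int n - 2)"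
      using norm n1 sol_norm(2)[OF n1] by simp
    ultimately have "B n = sol K P p2 q c n" by (rule Lin_inj[OF q K P n1])
    thus ?thesis by (simp add: K_def p2_def)
  qed
qed

lemma deriv_zero_const:
  fixes f :: "complex fls"
  assumes "fls_deriv f = 0" shows "f = fls_const (f $$ 0)"
proof (rule fls_eqI)
  fix n :: int
  show "f $$ n = fls_const (f $$ 0) $$ n"
  proof (cases "n = 0")
    case False
    have "fls_deriv f $$ (n - 1) = 0" using assms by simp
    hence "of_int n * f $$ n = 0" by simp
    thus ?thesis using False by simp
  qed simp
qed

lemma log_deriv_ode:
  fixes f :: "complex fls"
  assumes f: "f \<noteq> 0"
    and E: "f * (3 * fls_X^5 * fls_deriv f + fls_X^6 * fls_deriv (fls_deriv f)) = fls_X^6 * (fls_deriv f)^2"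
  shows "fls_deriv f = 0"
proof -
  define u where "u = fls_deriv f / f"
  have d1: "fls_deriv f = u * f" using f by (simp add: u_def)
  have "fls_deriv (fls_deriv f) = fls_deriv (u * f)" using d1 by simp
  also have "\<dots> = u * fls_deriv f + fls_deriv u * f" by simp
  finally have d2: "fls_deriv (fls_deriv f) = u * (u * f) + fls_deriv u * f" using d1 by simp
  have "fls_X^5 * f^2 * (3 * u + fls_X * fls_deriv u) = 0"
    using E[unfolded d2, unfolded d1] by (simp add: algebra_simps power2_eq_square numeral_eq_Suc)
  hence U: "3 * u + fls_X * fls_deriv u = 0" using f by simp
  have un: "\<And>n. n \<noteq> -3 \<Longrightarrow> u $$ n = 0"
  proof -
    fix n :: int assume n: "n \<noteq> -3"
    have "(3 * u + fls_X * fls_deriv u) $$ n = 0" using U by simp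
    hence "(3 + of_int n) * u $$ n = 0" by (simp add: fls_X_times_nth algebra_simps)
    moreover have "(3 + of_int n :: complex) \<noteq> 0"
    proof
      assume "(3 + of_int n :: complex) = 0"
      hence "(of_int (3 + n) :: complex) = 0" by simp
      hence "3 + n = 0" by (simp only: of_int_eq_0_iff)
      thus False using n by simp
    qed
    ultimately show "u $$ n = 0" by simp
  qed
  have "u $$ (-3) = 0"
  proof (rule ccontr)
    assume c: "u $$ (-3) \<noteq> 0"
    define s where "s = fls_subdegree f"
    have fs: "f $$ s \<noteq> 0" using f by (simp add: s_def)
    have "(u * f) $$ (-3 + s) = (\<Sum>i=-3..-3 + s - s. u $$ i * f $$ (-3 + s - i))"
      by (rule fls_times_nth_bounds) (auto simp: s_def un)
    hence "(u * f) $$ (s - 3) = u $$ (-3) * f $$ s" by simp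
    moreover have "(u * f) $$ (s - 3) = 0"
    proof -
      have "(u * f) $$ (s - 3) = fls_deriv f $$ (s - 3)" using d1 by simp
      also have "\<dots> = of_int (s - 2) * f $$ (s - 2)" by simp
      also have "f $$ (s - 2) = 0" by (simp add: s_def)
      finally show ?thesis by simp
    qed
    ultimately show False using c fs by simp
  qed
  hence "u = 0" using un by (intro fls_eqI) (metis zero_fls.rep_eq)
  thus ?thesis using d1 by simp
qed

lemma Lop0: "Lop 0 h = - (fls_X^3 * fls_deriv h)"
  by (simp add: Lop_def algebra_simps numeral_eq_Suc)

lemma deriv_X3: "fls_deriv (fls_X^3 * (h::complex fls)) = fls_X^3 * fls_deriv h + 3 * fls_X^2 * h"
  by (simp add: fls_deriv_power algebra_simps)

lemma B0_ode:
  assumes k: "\<kappa> \<noteq> 0" and P: "P \<noteq> 0" and pde: "pde P p \<kappa> (series B)" and B0: "B 0 \<noteq> 0"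
  shows "B 0 * (3 * fls_X^5 * fls_deriv (B 0) + fls_X^6 * fls_deriv (fls_deriv (B 0)))
     = fls_X^6 * (fls_deriv (B 0))^2"
proof -
  define K where "K = \<kappa>^2"
  define p2 where "p2 = p^2"
  have K: "K \<noteq> 0" using k by (simp add: K_def)
  define A where "A = series B"
  have A0: "A $$ 0 = B 0" by (simp add: A_def series_nth)
  have A: "A \<noteq> 0" using A0 B0 by auto
  have EA: "Eg K P p2 A = 0" using pde pde_iff_Eg[OF k A] by (simp add: K_def p2_def A_def)
  define W where "W = Wg K"
  define a where "a = Mop K P A"
  define aa where "aa = Mop K P a"
  define w where "w = Mop K P W"
  define c where "c = \<i>*P*K"
  have c: "c \<noteq> 0" using P K by (simp add: c_def)
  have xA: "xo A 0" by (simp add: xo_def A_def series_nth)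
  have xa: "xo a 0" using xA by (simp add: a_def xo_Mop)
  have xaa: "xo aa 0" using xa by (simp add: aa_def xo_Mop)
  have xW: "xo W 1" by (simp add: W_def xo_Wg)
  have xw: "xo w 2" by (simp add: w_def W_def xo_Mop_Wg)
  have a0: "a $$ 0 = fls_const c * Lop 0 (B 0)"
    using Mop_low[OF xA, of K P] by (simp add: a_def c_def A0)
  have aa0: "aa $$ 0 = fls_const c * Lop 0 (a $$ 0)"
    using Mop_low[OF xa, of K P] by (simp add: aa_def c_def)
  have eq: "Eg K P p2 A = 3 * (A * (W * aa) - A * (a * w) - W * (a * a)) + 16 * cst p2 * (A^3 - 1) * (W * W)"
    by (simp add: Eg_def W_def a_def aa_def w_def algebra_simps power2_eq_square)
  have e1: "(A * (W * aa)) $$ (0 + (1 + 0)) = A $$ 0 * (W $$ 1 * aa $$ 0)"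
    using xo_mult_nth[OF xA xo_mult'[OF xW xaa]] xo_mult_nth[OF xW xaa] by simp
  have e2: "(A * (a * w)) $$ 1 = 0"
    using xo_mult'[OF xA xo_mult'[OF xa xw]] by (simp add: xo_def)
  have e3: "(W * (a * a)) $$ (1 + (0 + 0)) = W $$ 1 * (a $$ 0 * a $$ 0)"
    using xo_mult_nth[OF xW xo_mult'[OF xa xa]] xo_mult_nth[OF xa xa] by simp
  have x4: "xo (16 * cst p2 * (A^3 - 1)) (0 + 0 + 0)"
    using xo_mult'[OF xo_mult'[OF xo_numeral xo_cst] xo_diff[OF xo_power[OF xA] xo_one]] .
  have e4: "(16 * cst p2 * (A^3 - 1) * (W * W)) $$ 1 = 0"
    using xo_mult'[OF x4 xo_mult'[OF xW xW]] by (simp add: xo_def)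
  have "Eg K P p2 A $$ 1 = 3 * (B 0 * (W $$ 1 * aa $$ 0) - W $$ 1 * (a $$ 0 * a $$ 0))"
    using e1 e2 e3 e4 A0 unfolding eq by simp
  hence "W $$ 1 * (B 0 * aa $$ 0 - a $$ 0 * a $$ 0) = 0" using EA by (simp add: algebra_simps) (metis eq_iff_diff_eq_0)
  moreover have "W $$ 1 \<noteq> 0" using K by (simp add: W_def Wg_nth1 fls_const_nonzero)
  ultimately have "B 0 * aa $$ 0 = a $$ 0 * a $$ 0" by simp
  hence "fls_const (c*c) * (B 0 * Lop 0 (Lop 0 (B 0)) - Lop 0 (B 0) * Lop 0 (B 0)) = 0"
    unfolding aa0 a0 Lop_const by (simp add: algebra_simps fls_const_mult_const[symmetric] del: fls_const_mult_const)
  hence "B 0 * Lop 0 (Lop 0 (B 0)) = Lop 0 (B 0) * Lop 0 (B 0)" using c by (simp add: fls_const_nonzero)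
  thus ?thesis unfolding Lop0 by (simp add: deriv_X3 algebra_simps power2_eq_square numeral_eq_Suc)
qed

theorem B0_const:
  assumes k: "\<kappa> \<noteq> 0" and P: "P \<noteq> 0" and pde: "pde P p \<kappa> (series B)" and B0: "B 0 \<noteq> 0"
  shows "\<exists>q. q \<noteq> 0 \<and> B 0 = fls_const q"
proof -
  have "fls_deriv (B 0) = 0" by (rule log_deriv_ode[OF B0 B0_ode[OF k P pde B0]])
  hence e: "B 0 = fls_const (B 0 $$ 0)" by (rule deriv_zero_const)
  hence "B 0 $$ 0 \<noteq> 0" using B0 by auto
  thus ?thesis using e by blast
qed

lemma cst_power: "cst (a ^ n) = cst a ^ n" by (simp add: cst_def fls_const_power)

lemma co_W2: "co ((Wg K)^2) 2 6 = 16 * K^2"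
proof -
  have "(Wg K * Wg K) $$ (1 + 1) = Wg K $$ 1 * Wg K $$ 1"
    by (rule xo_mult_nth[OF xo_Wg xo_Wg])
  hence "(Wg K)^2 $$ 2 = fls_const (16 * K^2) * fls_X ^ 6"
    by (simp add: power2_eq_square Wg_nth1 algebra_simps fls_const_mult_const[symmetric] power_add[symmetric]
        del: fls_const_mult_const)
  thus ?thesis by (simp add: co_def)
qed

lemma co_Eg_cst: "co (Eg K P p2 (cst q)) 2 6 = 256 * p2 * (q^3 - 1) * K^2"
proof -
  have "16 * cst p2 * (cst q ^ 3 - 1) = cst (16 * p2 * (q^3 - 1))"
    by (simp add: cst_mult cst_diff cst_power)
  hence "Eg K P p2 (cst q) = cst (16 * p2 * (q^3 - 1)) * (Wg K)^2" by (simp add: Eg_cst)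
  thus ?thesis by (simp add: co_W2)
qed

lemma lam_1: "lam K P q 1 (-1) = - 96 * q * K^3 * P^2"
  by (simp add: lam_def algebra_simps power2_eq_square power3_eq_cube)

lemma sol_1:
  assumes q: "q \<noteq> 0" and K: "K \<noteq> 0" and P: "P \<noteq> 0"
  shows "sol K P p2 q c 1 = fls_const (c 2) * fls_X ^ 3 + fls_const (c 1) * fls_X
     + fls_const (8 * p2 * (q^3 - 1) / (3 * K * P^2 * q)) * fls_X_inv"
proof (rule fls_eqI)
  fix s :: int
  have bk1: "sol K P p2 q c 1 $$ s = bk K P p2 q c 1 (cst q) s" by (simp add: sol_nth)
  show "sol K P p2 q c 1 $$ s = (fls_const (c 2) * fls_X ^ 3 + fls_const (c 1) * fls_X
     + fls_const (8 * p2 * (q^3 - 1) / (3 * K * P^2 * q)) * fls_X_inv) $$ s"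
  proof (cases "s = 3 \<or> s = 1 \<or> s = -1")
    case True
    moreover have "sol K P p2 q c 1 $$ (-1) = 8 * p2 * (q^3 - 1) / (3 * K * P^2 * q)"
    proof -
      have "sol K P p2 q c 1 $$ (-1) = bk K P p2 q c 1 (cst q) (-1)" by (simp add: sol_nth)
      also have "\<dots> = - co (Eg K P p2 (cst q)) 2 6 / lam K P q 1 (-1)" by (simp add: bk_def)
      also have "\<dots> = 8 * p2 * (q^3 - 1) / (3 * K * P^2 * q)"
        unfolding co_Eg_cst lam_1 using q K P by (simp add: field_simps power2_eq_square power3_eq_cube)
      finally show ?thesis .
    qed
    moreover have "sol K P p2 q c 1 $$ 3 = c 2" using sol_norm(1)[of 1 K P p2 q c] by simp
    moreover have "sol K P p2 q c 1 $$ 1 = c 1" using sol_norm(2)[of 1 K P p2 q c] by simp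
    ultimately show ?thesis by auto
  next
    case False
    have "sol K P p2 q c 1 $$ s = 0"
    proof (rule ccontr)
      assume "sol K P p2 q c 1 $$ s \<noteq> 0"
      from sol_support[OF this] False show False by (auto; presburger)
    qed
    thus ?thesis using False by simp
  qed
qed

type_synonym w4 = "complex \<times> complex \<times> complex \<times> complex"

definition Dom :: "w4 set" where
  "Dom = {w. fst w \<noteq> 0 \<and> fst (snd w) \<noteq> 0 \<and> snd (snd (snd w)) \<noteq> 0}"

definition good :: "(w4 \<Rightarrow> complex) \<Rightarrow> bool" where
  "good r \<longleftrightarrow> (\<exists>N D. \<forall>w\<in>Dom. eval4 D w \<noteq> 0 \<and> r w = eval4 N w / eval4 D w)"

lemma eval4_add: "eval4 (N1 + N2) w = eval4 N1 w + eval4 N2 w"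
  by (cases w) (simp add: eval4_def)
lemma eval4_mult: "eval4 (N1 * N2) w = eval4 N1 w * eval4 N2 w"
  by (cases w) (simp add: eval4_def)
lemma eval4_const: "eval4 [:[:[:[:z:]:]:]:] w = z"
  by (cases w) (simp add: eval4_def)
lemma eval4_p1: "eval4 [:[:[:[:0, 1:]:]:]:] w = fst w"
  by (cases w) (simp add: eval4_def)
lemma eval4_p2: "eval4 [:[:[:0, 1:]:]:] w = fst (snd w)"
  by (cases w) (simp add: eval4_def)
lemma eval4_p3: "eval4 [:[:0, 1:]:] w = fst (snd (snd w))"
  by (cases w) (simp add: eval4_def)
lemma eval4_p4: "eval4 [:0, 1:] w = snd (snd (snd w))"
  by (cases w) (simp add: eval4_def)

lemma good_const [simp]: "good (\<lambda>w. z)"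
  unfolding good_def by (rule exI[of _ "[:[:[:[:z:]:]:]:]"], rule exI[of _ "[:[:[:[:1:]:]:]:]"]) (simp add: eval4_const)

lemma good_polyI: "(\<And>w. w \<in> Dom \<Longrightarrow> r w = eval4 N w) \<Longrightarrow> good r"
  unfolding good_def by (rule exI[of _ N], rule exI[of _ "[:[:[:[:1:]:]:]:]"]) (simp add: eval4_const)

lemma good_p1 [simp]: "good (\<lambda>w. fst w)" by (rule good_polyI[of _ "[:[:[:[:0, 1:]:]:]:]"]) (simp add: eval4_p1)
lemma good_p2 [simp]: "good (\<lambda>w. fst (snd w))" by (rule good_polyI[of _ "[:[:[:0, 1:]:]:]"]) (simp add: eval4_p2)
lemma good_p3 [simp]: "good (\<lambda>w. fst (snd (snd w)))" by (rule good_polyI[of _ "[:[:0, 1:]:]"]) (simp add: eval4_p3)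
lemma good_p4 [simp]: "good (\<lambda>w. snd (snd (snd w)))" by (rule good_polyI[of _ "[:0, 1:]"]) (simp add: eval4_p4)

lemma good_add: assumes "good r1" "good r2" shows "good (\<lambda>w. r1 w + r2 w)"
proof -
  from assms obtain N1 D1 N2 D2 where
    1: "\<forall>w\<in>Dom. eval4 D1 w \<noteq> 0 \<and> r1 w = eval4 N1 w / eval4 D1 w" and
    2: "\<forall>w\<in>Dom. eval4 D2 w \<noteq> 0 \<and> r2 w = eval4 N2 w / eval4 D2 w"
    unfolding good_def by blast
  show ?thesis unfolding good_def
    by (rule exI[of _ "N1 * D2 + N2 * D1"], rule exI[of _ "D1 * D2"])
       (use 1 2 in \<open>auto simp: eval4_add eval4_mult field_simps\<close>)
qed

lemma good_mult: assumes "good r1" "good r2" shows "good (\<lambda>w. r1 w * r2 w)"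
proof -
  from assms obtain N1 D1 N2 D2 where
    1: "\<forall>w\<in>Dom. eval4 D1 w \<noteq> 0 \<and> r1 w = eval4 N1 w / eval4 D1 w" and
    2: "\<forall>w\<in>Dom. eval4 D2 w \<noteq> 0 \<and> r2 w = eval4 N2 w / eval4 D2 w"
    unfolding good_def by blast
  show ?thesis unfolding good_def
    by (rule exI[of _ "N1 * N2"], rule exI[of _ "D1 * D2"])
       (use 1 2 in \<open>auto simp: eval4_add eval4_mult field_simps\<close>)
qed

lemma good_div: assumes "good r1" and nz: "\<And>w. w \<in> Dom \<Longrightarrow> eval4 E w \<noteq> 0"
  shows "good (\<lambda>w. r1 w / eval4 E w)"
proof -
  from assms(1) obtain N1 D1 where
    1: "\<forall>w\<in>Dom. eval4 D1 w \<noteq> 0 \<and> r1 w = eval4 N1 w / eval4 D1 w"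
    unfolding good_def by blast
  show ?thesis unfolding good_def
    by (rule exI[of _ "N1"], rule exI[of _ "D1 * E"])
       (use 1 assms(2) in \<open>auto simp: eval4_mult field_simps\<close>)
qed

lemma good_div1: "good r \<Longrightarrow> good (\<lambda>w. r w / fst w)"
  using good_div[of r "[:[:[:[:0, 1:]:]:]:]"] by (simp add: eval4_p1 Dom_def)
lemma good_div2: "good r \<Longrightarrow> good (\<lambda>w. r w / fst (snd w))"
  using good_div[of r "[:[:[:0, 1:]:]:]"] by (simp add: eval4_p2 Dom_def)
lemma good_div4: "good r \<Longrightarrow> good (\<lambda>w. r w / snd (snd (snd w)))"
  using good_div[of r "[:0, 1:]"] by (simp add: eval4_p4 Dom_def)

lemma good_sum: "finite S \<Longrightarrow> (\<And>i. i \<in> S \<Longrightarrow> good (r i)) \<Longrightarrow> good (\<lambda>w. \<Sum>i\<in>S. r i w)"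
proof (induction S rule: finite_induct)
  case empty thus ?case by simp
next
  case (insert x F)
  thus ?case by (simp add: good_add)
qed

lemma good_cong: "good r \<Longrightarrow> (\<And>w. w \<in> Dom \<Longrightarrow> r w = r' w) \<Longrightarrow> good r'"
  unfolding good_def by metis

type_synonym xi = "w4 \<times> (nat \<Rightarrow> complex)"

definition ES :: "nat \<Rightarrow> int \<Rightarrow> (nat \<Rightarrow> nat) set" where
  "ES J m = {n. (\<forall>j. n j \<noteq> 0 \<longrightarrow> 1 \<le> j \<and> j \<le> J) \<and> int (\<Sum>j = 1..J. j * n j) \<le> m}"

definition cmono :: "(nat \<Rightarrow> complex) \<Rightarrow> (nat \<Rightarrow> nat) \<Rightarrow> nat \<Rightarrow> complex" where
  "cmono c n J = (\<Prod>j = 1..J. c j ^ n j)"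

definition Gc :: "nat \<Rightarrow> int \<Rightarrow> (xi \<Rightarrow> complex) set" where
  "Gc J m = {f. \<exists>r. (\<forall>n. good (r n)) \<and>
      (\<forall>w\<in>Dom. \<forall>c. f (w, c) = (\<Sum>n\<in>ES J m. r n w * cmono c n J))}"

lemma ES_bound: assumes "n \<in> ES J m" shows "n j \<le> nat m"
proof (cases "n j = 0")
  case False
  with assms have j: "1 \<le> j" "j \<le> J" by (auto simp: ES_def)
  have S: "int (\<Sum>j = 1..J. j * n j) \<le> m" using assms unfolding ES_def by blast
  have "j * n j \<le> (\<Sum>j = 1..J. j * n j)"
    by (rule member_le_sum) (use j in auto)
  moreover have "n j \<le> j * n j" using j by simp
  ultimately have "int (n j) \<le> m" using S by linarith
  thus ?thesis by simp
qed simp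

lemma finite_ES: "finite (ES J m)"
proof -
  have "ES J m \<subseteq> {f. \<forall>x. (x \<in> {1..J} \<longrightarrow> f x \<in> {0..nat m}) \<and> (x \<notin> {1..J} \<longrightarrow> f x = 0)}"
    using ES_bound by (auto simp: ES_def)
  thus ?thesis by (rule finite_subset) (rule finite_set_of_finite_funs; simp)
qed

lemma ES_mono: "m \<le> m' \<Longrightarrow> ES J m \<subseteq> ES J m'"
  by (auto simp: ES_def)

lemma ES_add: assumes "n1 \<in> ES J m1" "n2 \<in> ES J m2" shows "(\<lambda>j. n1 j + n2 j) \<in> ES J (m1 + m2)"
  using assms by (auto simp: ES_def sum.distrib algebra_simps)

lemma ES_0: "ES J 0 = {\<lambda>_. 0}"
proof
  show "ES J 0 \<subseteq> {\<lambda>_. 0}"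
  proof
    fix n assume n: "n \<in> ES J 0"
    have "n = (\<lambda>_. 0)"
    proof
      fix j show "n j = 0" using ES_bound[OF n, of j] by simp
    qed
    thus "n \<in> {\<lambda>_. 0}" by simp
  qed
  show "{\<lambda>_. 0} \<subseteq> ES J 0" by (simp add: ES_def)
qed

lemma cmono_add: "cmono c (\<lambda>j. n1 j + n2 j) J = cmono c n1 J * cmono c n2 J"
  by (simp add: cmono_def power_add prod.distrib)

lemma cmono_0 [simp]: "cmono c (\<lambda>_. 0) J = 1" by (simp add: cmono_def)

lemma Gc_cong: "f \<in> Gc J m \<Longrightarrow> (\<And>w c. w \<in> Dom \<Longrightarrow> f (w, c) = g (w, c)) \<Longrightarrow> g \<in> Gc J m"
  unfolding Gc_def by auto

lemma Gc_zero [simp]: "(\<lambda>_. 0) \<in> Gc J m"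
  unfolding Gc_def by (rule CollectI, rule exI[of _ "\<lambda>n w. 0"]) simp

lemma Gc_add: assumes "f \<in> Gc J m" "g \<in> Gc J m" shows "(\<lambda>x. f x + g x) \<in> Gc J m"
proof -
  from assms obtain r1 r2 where
    r1: "\<forall>n. good (r1 n)" "\<forall>w\<in>Dom. \<forall>c. f (w, c) = (\<Sum>n\<in>ES J m. r1 n w * cmono c n J)" and
    r2: "\<forall>n. good (r2 n)" "\<forall>w\<in>Dom. \<forall>c. g (w, c) = (\<Sum>n\<in>ES J m. r2 n w * cmono c n J)"
    unfolding Gc_def by blast
  show ?thesis unfolding Gc_def
    by (rule CollectI, rule exI[of _ "\<lambda>n w. r1 n w + r2 n w"])
       (use r1 r2 in \<open>auto simp: good_add sum.distrib algebra_simps\<close>)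
qed

lemma Gc_scale: assumes "good g" "f \<in> Gc J m" shows "(\<lambda>x. g (fst x) * f x) \<in> Gc J m"
proof -
  from assms obtain r1 where
    r1: "\<forall>n. good (r1 n)" "\<forall>w\<in>Dom. \<forall>c. f (w, c) = (\<Sum>n\<in>ES J m. r1 n w * cmono c n J)"
    unfolding Gc_def by blast
  show ?thesis unfolding Gc_def
    by (rule CollectI, rule exI[of _ "\<lambda>n w. g w * r1 n w"])
       (use r1 assms(1) in \<open>auto simp: good_mult sum_distrib_left algebra_simps\<close>)
qed

lemma Gc_uminus: assumes "f \<in> Gc J m" shows "(\<lambda>x. - f x) \<in> Gc J m"
  using Gc_scale[OF good_const[of "-1"] assms] by simp

lemma Gc_diff: assumes "f \<in> Gc J m" "g \<in> Gc J m" shows "(\<lambda>x. f x - g x) \<in> Gc J m"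
  using Gc_add[OF assms(1) Gc_uminus[OF assms(2)]] by simp

lemma Gc_mono: assumes "f \<in> Gc J m" "m \<le> m'" shows "f \<in> Gc J m'"
proof -
  from assms obtain r1 where
    r1: "\<forall>n. good (r1 n)" "\<forall>w\<in>Dom. \<forall>c. f (w, c) = (\<Sum>n\<in>ES J m. r1 n w * cmono c n J)"
    unfolding Gc_def by blast
  define r where "r n = (if n \<in> ES J m then r1 n else (\<lambda>w. 0))" for n
  have g: "\<forall>n. good (r n)" using r1 by (simp add: r_def)
  have "\<forall>w\<in>Dom. \<forall>c. f (w, c) = (\<Sum>n\<in>ES J m'. r n w * cmono c n J)"
  proof (intro ballI allI)
    fix w c assume "w \<in> Dom"
    hence "f (w, c) = (\<Sum>n\<in>ES J m. r n w * cmono c n J)" using r1 by (simp add: r_def)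
    also have "\<dots> = (\<Sum>n\<in>ES J m'. r n w * cmono c n J)"
      by (rule sum.mono_neutral_left) (auto simp: finite_ES ES_mono[OF assms(2)] r_def)
    finally show "f (w, c) = (\<Sum>n\<in>ES J m'. r n w * cmono c n J)" .
  qed
  with g show ?thesis unfolding Gc_def by blast
qed

lemma Gc_mult: assumes "f \<in> Gc J m1" "g \<in> Gc J m2" shows "(\<lambda>x. f x * g x) \<in> Gc J (m1 + m2)"
proof -
  from assms obtain r1 r2 where
    r1: "\<forall>n. good (r1 n)" "\<forall>w\<in>Dom. \<forall>c. f (w, c) = (\<Sum>n\<in>ES J m1. r1 n w * cmono c n J)" and
    r2: "\<forall>n. good (r2 n)" "\<forall>w\<in>Dom. \<forall>c. g (w, c) = (\<Sum>n\<in>ES J m2. r2 n w * cmono c n J)"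
    unfolding Gc_def by blast
  define S where "S = ES J m1 \<times> ES J m2"
  have fS: "finite S" by (simp add: S_def finite_ES)
  define r where "r N w = (\<Sum>p\<in>{p. p \<in> S \<and> (\<lambda>j. fst p j + snd p j) = N}. r1 (fst p) w * r2 (snd p) w)" for N w
  have g: "\<forall>N. good (r N)"
  proof
    fix N
    have "finite {p. p \<in> S \<and> (\<lambda>j. fst p j + snd p j) = N}" using fS by simp
    thus "good (r N)" unfolding r_def by (rule good_sum) (use r1 r2 in \<open>auto intro: good_mult\<close>)
  qed
  have "\<forall>w\<in>Dom. \<forall>c. f (w, c) * g (w, c) = (\<Sum>N\<in>ES J (m1 + m2). r N w * cmono c N J)"
  proof (intro ballI allI)
    fix w c assume w: "w \<in> Dom"
    define h where "h p = r1 (fst p) w * r2 (snd p) w * cmono c (\<lambda>j. fst p j + snd p j) J" for p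
    have "f (w, c) * g (w, c) = (\<Sum>n1\<in>ES J m1. \<Sum>n2\<in>ES J m2. r1 n1 w * cmono c n1 J * (r2 n2 w * cmono c n2 J))"
      using r1 r2 w by (simp add: sum_product)
    also have "\<dots> = (\<Sum>p\<in>S. h p)"
      by (simp add: S_def h_def sum.cartesian_product cmono_add algebra_simps split_def)
    also have "\<dots> = (\<Sum>N\<in>ES J (m1 + m2). \<Sum>p\<in>{p. p \<in> S \<and> (\<lambda>j. fst p j + snd p j) = N}. h p)"
      by (rule sum.group[symmetric]) (auto simp: fS finite_ES S_def ES_add)
    also have "\<dots> = (\<Sum>N\<in>ES J (m1 + m2). r N w * cmono c N J)"
      by (rule sum.cong) (auto simp: r_def h_def sum_distrib_right)
    finally show "f (w, c) * g (w, c) = (\<Sum>N\<in>ES J (m1 + m2). r N w * cmono c N J)" .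
  qed
  with g show ?thesis unfolding Gc_def by blast
qed

lemma Gc_one: "(\<lambda>_. 1) \<in> Gc J 0"
  unfolding Gc_def by (rule CollectI, rule exI[of _ "\<lambda>n w. 1"]) (simp add: ES_0)

lemma Gc_good: assumes "good g" shows "(\<lambda>x. g (fst x)) \<in> Gc J 0"
  using Gc_scale[OF assms Gc_one] by simp

lemma Gc_var: assumes "1 \<le> j" "j \<le> J" shows "(\<lambda>x. snd x j) \<in> Gc J (int j)"
proof -
  define d where "d = (\<lambda>i::nat. if i = j then 1 else (0::nat))"
  have s: "(\<Sum>i = 1..J. i * d i) = j"
  proof -
    have "(\<Sum>i = 1..J. i * d i) = (\<Sum>i = 1..J. if i = j then j else 0)"
      by (rule sum.cong) (auto simp: d_def)
    also have "\<dots> = j" using assms by simp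
    finally show ?thesis .
  qed
  have dE: "d \<in> ES J (int j)"
    unfolding ES_def mem_Collect_eq
  proof (rule conjI)
    show "\<forall>i. d i \<noteq> 0 \<longrightarrow> 1 \<le> i \<and> i \<le> J" using assms by (auto simp: d_def)
    show "int (\<Sum>i = 1..J. i * d i) \<le> int j" unfolding s by simp
  qed
  have md: "cmono c d J = c j" for c
  proof -
    have "cmono c d J = (\<Prod>i = 1..J. if i = j then c j else 1)"
      unfolding cmono_def by (rule prod.cong) (auto simp: d_def)
    also have "\<dots> = c j" using assms by simp
    finally show ?thesis .
  qed
  show ?thesis unfolding Gc_def
  proof (rule CollectI, rule exI[of _ "\<lambda>n w. if n = d then 1 else 0"], intro conjI)
    show "\<forall>n. good (\<lambda>w. if n = d then 1 else 0)" by simp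
    show "\<forall>w\<in>Dom. \<forall>c. snd (w, c) j = (\<Sum>n\<in>ES J (int j). (if n = d then 1 else 0) * cmono c n J)"
    proof (intro ballI allI)
      fix w c
      have "(\<Sum>n\<in>ES J (int j). (if n = d then 1 else 0) * cmono c n J)
          = (\<Sum>n\<in>ES J (int j). if n = d then cmono c n J else 0)" by (rule sum.cong) auto
      also have "\<dots> = c j" using dE by (simp add: finite_ES md)
      finally show "snd (w, c) j = (\<Sum>n\<in>ES J (int j). (if n = d then 1 else 0) * cmono c n J)" by simp
    qed
  qed
qed

lemma Gc_sum: "finite S \<Longrightarrow> (\<And>i. i \<in> S \<Longrightarrow> f i \<in> Gc J m) \<Longrightarrow> (\<lambda>x. \<Sum>i\<in>S. f i x) \<in> Gc J m"
proof (induction S rule: finite_induct)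
  case empty thus ?case by simp
next
  case (insert a F)
  thus ?case by (simp add: Gc_add)
qed

lemma co_support_x:
  assumes "\<And>a b. co F a b \<noteq> 0 \<Longrightarrow> 0 \<le> a" and "i < 0" shows "F $$ i = 0"
proof (rule fls_eqI)
  fix j show "F $$ i $$ j = 0 $$ j" using assms(1)[of i j] \<open>i < 0\<close> by (auto simp: co_def)
qed

lemma co_mult_formula:
  assumes F: "\<And>a b. co F a b \<noteq> 0 \<Longrightarrow> 0 \<le> a \<and> d1 \<le> a + b"
      and G: "\<And>a b. co G a b \<noteq> 0 \<Longrightarrow> 0 \<le> a \<and> d2 \<le> a + b"
  shows "co (F * G) a b = (\<Sum>i=0..a. \<Sum>j=d1 - i..b - (d2 - (a - i)). co F i j * co G (a - i) (b - j))"
proof -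
  have F0: "\<And>i. i < 0 \<Longrightarrow> F $$ i = 0" by (rule co_support_x) (use F in auto)
  have G0: "\<And>i. i < 0 \<Longrightarrow> G $$ i = 0" by (rule co_support_x) (use G in auto)
  have "(F * G) $$ a = (\<Sum>i=0..a-0. F$$i * G$$(a-i))" by (rule fls_times_nth_bounds[OF F0 G0])
  hence "co (F * G) a b = (\<Sum>i=0..a. (F$$i * G$$(a-i)) $$ b)" by (simp add: co_def fls_nth_sum)
  also have "\<dots> = (\<Sum>i=0..a. \<Sum>j=d1 - i..b - (d2 - (a - i)). co F i j * co G (a - i) (b - j))"
  proof (rule sum.cong[OF refl])
    fix i
    have Fi: "\<And>j. j < d1 - i \<Longrightarrow> F$$i$$j = 0" using F by (force simp: co_def)
    have Gi: "\<And>j. j < d2 - (a - i) \<Longrightarrow> G$$(a-i)$$j = 0" using G by (force simp: co_def)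
    show "(F$$i * G$$(a-i)) $$ b = (\<Sum>j=d1 - i..b - (d2 - (a - i)). co F i j * co G (a - i) (b - j))"
      unfolding co_def by (rule fls_times_nth_bounds[OF Fi Gi])
  qed
  finally show ?thesis .
qed

definition GF :: "nat \<Rightarrow> int \<Rightarrow> (xi \<Rightarrow> ser) \<Rightarrow> bool" where
  "GF J d F \<longleftrightarrow> (\<forall>a b. (\<lambda>x. co (F x) a b) \<in> Gc J ((a + b) div 2 - d))"

definition US :: "int \<Rightarrow> (xi \<Rightarrow> ser) \<Rightarrow> bool" where
  "US d F \<longleftrightarrow> (\<forall>x a b. co (F x) a b \<noteq> 0 \<longrightarrow> 0 \<le> a \<and> d \<le> a + b)"

lemma US_spp: "(\<And>x. spp (F x) d g) \<Longrightarrow> US d F"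
  unfolding US_def spp_def by blast

lemma GFD: "GF J d F \<Longrightarrow> (\<lambda>x. co (F x) a b) \<in> Gc J ((a + b) div 2 - d)"
  by (simp add: GF_def)

lemma div2_add: "(x::int) div 2 + y div 2 \<le> (x + y) div 2" by presburger

lemma div2_sub2: "((x::int) - 2) div 2 = x div 2 - 1" by presburger

lemma GF_mult:
  assumes "GF J d1 F" "US e1 F" "GF J d2 G" "US e2 G"
  shows "GF J (d1 + d2) (\<lambda>x. F x * G x)"
  unfolding GF_def
proof (intro allI)
  fix a b
  have eq: "(\<lambda>x. co (F x * G x) a b) =
      (\<lambda>x. \<Sum>i=0..a. \<Sum>j=e1 - i..b - (e2 - (a - i)). co (F x) i j * co (G x) (a - i) (b - j))"
  proof
    fix x
    have u1: "\<And>a b. co (F x) a b \<noteq> 0 \<Longrightarrow> 0 \<le> a \<and> e1 \<le> a + b" using assms(2) unfolding US_def by blast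
    have u2: "\<And>a b. co (G x) a b \<noteq> 0 \<Longrightarrow> 0 \<le> a \<and> e2 \<le> a + b" using assms(4) unfolding US_def by blast
    show "co (F x * G x) a b =
      (\<Sum>i=0..a. \<Sum>j=e1 - i..b - (e2 - (a - i)). co (F x) i j * co (G x) (a - i) (b - j))"
      by (rule co_mult_formula[OF u1 u2])
  qed
  show "(\<lambda>x. co (F x * G x) a b) \<in> Gc J ((a + b) div 2 - (d1 + d2))"
    unfolding eq
  proof (intro Gc_sum)
    fix i j
    have "(\<lambda>x. co (F x) i j * co (G x) (a - i) (b - j)) \<in> Gc J (((i + j) div 2 - d1) + ((a - i + (b - j)) div 2 - d2))"
      by (rule Gc_mult[OF GFD[OF assms(1)] GFD[OF assms(3)]])
    moreover have "((i + j) div 2 - d1) + ((a - i + (b - j)) div 2 - d2) \<le> (a + b) div 2 - (d1 + d2)"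
      using div2_add[of "i + j" "a - i + (b - j)"] by simp
    ultimately show "(\<lambda>x. co (F x) i j * co (G x) (a - i) (b - j)) \<in> Gc J ((a + b) div 2 - (d1 + d2))"
      by (rule Gc_mono)
  qed auto
qed

lemma GF_add: "GF J d F \<Longrightarrow> GF J d G \<Longrightarrow> GF J d (\<lambda>x. F x + G x)"
  unfolding GF_def by (simp add: Gc_add)
lemma GF_diff: "GF J d F \<Longrightarrow> GF J d G \<Longrightarrow> GF J d (\<lambda>x. F x - G x)"
  unfolding GF_def by (simp add: Gc_diff)
lemma GF_mono: "GF J d F \<Longrightarrow> d' \<le> d \<Longrightarrow> GF J d' F"
  unfolding GF_def by (meson Gc_mono diff_left_mono)
lemma GF_scale: assumes g: "good g" and F: "GF J d F" shows "GF J d (\<lambda>x. cst (g (fst x)) * F x)"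
  unfolding GF_def
proof (intro allI)
  fix a b
  show "(\<lambda>x. co (cst (g (fst x)) * F x) a b) \<in> Gc J ((a + b) div 2 - d)"
    using Gc_scale[OF g GFD[OF F, of a b]] by simp
qed
lemma GF_numeral: "GF J d F \<Longrightarrow> GF J d (\<lambda>x. numeral n * F x)"
  using GF_scale[OF good_const[of "numeral n"]] by simp
lemma GF_cst: "good g \<Longrightarrow> GF J 0 (\<lambda>x. cst (g (fst x)))"
  unfolding GF_def
proof (intro allI)
  fix a b assume g: "good g"
  show "(\<lambda>x. co (cst (g (fst x))) a b) \<in> Gc J ((a + b) div 2 - 0)"
  proof (cases "a = 0 \<and> b = 0")
    case True thus ?thesis using Gc_good[OF g] by simp
  next
    case False
    hence "(\<lambda>x. co (cst (g (fst x))) a b) = (\<lambda>x. 0)" by (auto simp: fun_eq_iff)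
    from this show ?thesis by (rule ssubst[where P="\<lambda>f. f \<in> Gc J _"]) (rule Gc_zero)
  qed
qed
lemma GF_one: "GF J 0 (\<lambda>x. 1)"
  using GF_cst[OF good_const[of 1]] by simp

lemma US_mult: "US d1 F \<Longrightarrow> US d2 G \<Longrightarrow> US (d1 + d2) (\<lambda>x. F x * G x)"
  unfolding US_def
proof (intro allI impI)
  fix x a b assume a1: "\<forall>x a b. co (F x) a b \<noteq> 0 \<longrightarrow> 0 \<le> a \<and> d1 \<le> a + b"
    and a2: "\<forall>x a b. co (G x) a b \<noteq> 0 \<longrightarrow> 0 \<le> a \<and> d2 \<le> a + b"
    and "co (F x * G x) a b \<noteq> 0"
  then obtain i j where "co (F x) i j \<noteq> 0" "co (G x) (a - i) (b - j) \<noteq> 0"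
    by (blast dest: co_mult_nonzero)
  with a1 a2 have "0 \<le> i \<and> d1 \<le> i + j" "0 \<le> a - i \<and> d2 \<le> a - i + (b - j)" by blast+
  thus "0 \<le> a \<and> d1 + d2 \<le> a + b" by linarith
qed

abbreviation "Kx x \<equiv> fst (fst x)"
abbreviation "Px x \<equiv> fst (snd (fst x))"
abbreviation "qx x \<equiv> snd (snd (snd (fst x)))"

lemma GF_Mop: assumes "GF J d F" shows "GF J (d + 1) (\<lambda>x. Mop (Kx x) (Px x) (F x))"
  unfolding GF_def
proof (intro allI)
  fix a b
  have G: "\<And>i j. (\<lambda>x. co (F x) i j) \<in> Gc J ((i + j) div 2 - d)" using assms by (simp add: GF_def)
  have T: "\<And>g i j. good g \<Longrightarrow> 2 \<le> (a - i) + (b - j) \<Longrightarrow>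
       (\<lambda>x. g (fst x) * co (F x) i j) \<in> Gc J ((a + b) div 2 - (d + 1))"
  proof -
    fix g i j assume g: "good g" and ij: "2 \<le> (a - i) + (b - j)"
    have "(\<lambda>x. g (fst x) * co (F x) i j) \<in> Gc J ((i + j) div 2 - d)" by (rule Gc_scale[OF g G])
    moreover have "(i + j) div 2 - d \<le> (a + b) div 2 - (d + 1)"
    proof -
      have "(i + j) div 2 \<le> (a + b - 2) div 2" by (rule zdiv_mono1) (use ij in linarith, simp)
      moreover have "(a + b - 2) div 2 = (a + b) div 2 - 1" by (simp add: div2_sub2)
      ultimately show ?thesis by linarith
    qed
    ultimately show "(\<lambda>x. g (fst x) * co (F x) i j) \<in> Gc J ((a + b) div 2 - (d + 1))" by (rule Gc_mono)
  qed
  have gK: "good (\<lambda>w. fst w)" by simp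
  have gP: "good (\<lambda>w. fst (snd w))" by simp
  have gL: "good (\<lambda>w. 8 - 4 * fst w)"
    using good_add[OF good_const[of 8] good_mult[OF good_const[of "-4"] gK]] by simp
  have gc: "\<And>z. good (\<lambda>w. z * fst w)" using good_mult[OF good_const gK] .
  have gPK: "good (\<lambda>w. \<i> * fst (snd w) * fst w)" using good_mult[OF good_mult[OF good_const[of \<i>] gP] gK] .
  have gPL: "good (\<lambda>w. \<i> * fst (snd w) * (8 - 4 * fst w))" using good_mult[OF good_mult[OF good_const[of \<i>] gP] gL] .
  have g1: "good (\<lambda>w. 2 * fst w * of_int (a - 1 + (b - 3)))" using good_mult[OF gc good_const] .
  have g2: "good (\<lambda>w. (8 - 4 * fst w) * of_int (a - 2 + (b - 2)))" using good_mult[OF gL good_const] .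
  have g3: "good (\<lambda>w. 2 * fst w * of_int (a - 3 + (b - 1)))" using good_mult[OF gc good_const] .
  have g4: "good (\<lambda>w. \<i> * fst (snd w) * fst w * of_int (3 * a - (b - 2)))" using good_mult[OF gPK good_const] .
  have g5: "good (\<lambda>w. \<i> * fst (snd w) * (8 - 4 * fst w) * of_int (a - 1 - (b - 1)))" using good_mult[OF gPL good_const] .
  have g6: "good (\<lambda>w. \<i> * fst (snd w) * fst w * of_int (a - 2 - 3 * b))" using good_mult[OF gPK good_const] .
  have "(\<lambda>x. co (Mop (Kx x) (Px x) (F x)) a b) =
     (\<lambda>x. (2 * Kx x * of_int (a - 1 + (b - 3))) * co (F x) (a - 1) (b - 3)
        + ((8 - 4 * Kx x) * of_int (a - 2 + (b - 2))) * co (F x) (a - 2) (b - 2)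
        + (2 * Kx x * of_int (a - 3 + (b - 1))) * co (F x) (a - 3) (b - 1)
        + (\<i> * Px x * Kx x * of_int (3 * a - (b - 2))) * co (F x) a (b - 2)
        + (\<i> * Px x * (8 - 4 * Kx x) * of_int (a - 1 - (b - 1))) * co (F x) (a - 1) (b - 1)
        + (\<i> * Px x * Kx x * of_int (a - 2 - 3 * b)) * co (F x) (a - 2) b)"
    by (rule ext) (rule co_Mop)
  also have "\<dots> \<in> Gc J ((a + b) div 2 - (d + 1))"
    by (intro Gc_add T[OF g1] T[OF g2] T[OF g3] T[OF g4] T[OF g5] T[OF g6]) simp_all
  finally show "(\<lambda>x. co (Mop (Kx x) (Px x) (F x)) a b) \<in> Gc J ((a + b) div 2 - (d + 1))" .
qed

lemma GF_W: "GF J 2 (\<lambda>x. Wg (Kx x))"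
  unfolding GF_def
proof (intro allI)
  fix a b
  have g1: "good (\<lambda>w. 4 * fst w)" using good_mult[OF good_const good_p1] .
  have g2: "good (\<lambda>w. 16 - 8 * fst w)"
    using good_add[OF good_const[of 16] good_mult[OF good_const[of "-8"] good_p1]] by simp
  show "(\<lambda>x. co (Wg (Kx x)) a b) \<in> Gc J ((a + b) div 2 - 2)"
  proof (cases "(a = 1 \<and> b = 3) \<or> (a = 2 \<and> b = 2) \<or> (a = 3 \<and> b = 1)")
    case True
    thus ?thesis using Gc_good[OF g1, of J] Gc_good[OF g2, of J] by (auto simp: co_Wg)
  next
    case False
    hence "(\<lambda>x. co (Wg (Kx x)) a b) = (\<lambda>x. 0)" by (auto simp: fun_eq_iff co_Wg)
    from this show ?thesis by (rule ssubst[where P="\<lambda>f. f \<in> Gc J _"]) (rule Gc_zero)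
  qed
qed

lemma US_diff: "US d F \<Longrightarrow> US d G \<Longrightarrow> US d (\<lambda>x. F x - G x)"
  unfolding US_def by (metis co_diff diff_0 diff_0_right)
lemma US_add: "US d F \<Longrightarrow> US d G \<Longrightarrow> US d (\<lambda>x. F x + G x)"
  unfolding US_def by (metis co_add add_0 add.right_neutral)

lemma Eg_alt: "Eg K P p2 A = 3 * (A * (Wg K * Mop K P (Mop K P A) - Mop K P A * Mop K P (Wg K))
      - Wg K * (Mop K P A * Mop K P A)) + cst 16 * cst p2 * ((A * (A * A) - 1) * (Wg K * Wg K))"
  by (simp add: Eg_def power2_eq_square power3_eq_cube algebra_simps)

lemma GF_Eg:
  assumes pw: "good pw" and GA: "GF J 0 A" and SA: "\<And>x. spp (A x) 0 0"
  shows "GF J 4 (\<lambda>x. Eg (Kx x) (Px x) (pw (fst x)) (A x))"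
proof -
  define W where "W = (\<lambda>x::xi. Wg (Kx x))"
  define a where "a = (\<lambda>x::xi. Mop (Kx x) (Px x) (A x))"
  define aa where "aa = (\<lambda>x::xi. Mop (Kx x) (Px x) (a x))"
  define w where "w = (\<lambda>x::xi. Mop (Kx x) (Px x) (W x))"
  have sa: "\<And>x. spp (a x) 2 0" unfolding a_def using spp_Mop[OF SA] by simp
  have uA: "US 0 A" by (rule US_spp[OF SA])
  have uW: "US 4 W" unfolding W_def by (rule US_spp[OF spp_Wg])
  have ua: "US 2 a" by (rule US_spp[OF sa])
  have saa: "\<And>x. spp (aa x) 4 0" unfolding aa_def using spp_Mop[OF sa] by simp
  have uaa: "US 4 aa" by (rule US_spp[OF saa])
  have sw: "\<And>x. spp (w x) 6 0" unfolding w_def W_def using spp_Mop[OF spp_Wg] by simp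
  have uw: "US 6 w" by (rule US_spp[OF sw])
  have gW: "GF J 2 W" unfolding W_def by (rule GF_W)
  have ga: "GF J 1 a" unfolding a_def using GF_Mop[OF GA] by simp
  have gaa: "GF J 2 aa" unfolding aa_def using GF_Mop[OF ga] by simp
  have gw: "GF J 3 w" unfolding w_def using GF_Mop[OF gW] by simp
  have g1: "GF J 4 (\<lambda>x. W x * aa x)" using GF_mult[OF gW uW gaa uaa] by simp
  have g2: "GF J 4 (\<lambda>x. a x * w x)" using GF_mult[OF ga ua gw uw] by simp
  have u1: "US 8 (\<lambda>x. W x * aa x)" using US_mult[OF uW uaa] by simp
  have u2: "US 8 (\<lambda>x. a x * w x)" using US_mult[OF ua uw] by simp
  have g3: "GF J 4 (\<lambda>x. A x * (W x * aa x - a x * w x))"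
    using GF_mult[OF GA uA GF_diff[OF g1 g2] US_diff[OF u1 u2]] by simp
  have g4: "GF J 4 (\<lambda>x. W x * (a x * a x))"
    using GF_mult[OF gW uW GF_mult[OF ga ua ga ua] US_mult[OF ua ua]] by simp
  have g5: "GF J 4 (\<lambda>x. 3 * (A x * (W x * aa x - a x * w x) - W x * (a x * a x)))"
    using GF_numeral[OF GF_diff[OF g3 g4]] .
  have gA3': "GF J 0 (\<lambda>x. A x * (A x * A x))"
    using GF_mult[OF GA uA GF_mult[OF GA uA GA uA] US_mult[OF uA uA]] by simp
  have gA3: "GF J 0 (\<lambda>x. A x * (A x * A x) - 1)"
    using GF_diff[OF gA3' GF_one] by simp
  have u3: "US 0 (\<lambda>x. A x * (A x * A x))" using US_mult[OF uA US_mult[OF uA uA]] by simp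
  have u1': "US 0 (\<lambda>x::xi. 1)" by (rule US_spp[OF spp_one])
  have uA3: "US 0 (\<lambda>x. A x * (A x * A x) - 1)"
    using US_diff[OF u3 u1'] by simp
  have gWW: "GF J 4 (\<lambda>x. W x * W x)" using GF_mult[OF gW uW gW uW] by simp
  have g6: "GF J 4 (\<lambda>x. (A x * (A x * A x) - 1) * (W x * W x))"
    using GF_mult[OF gA3 uA3 gWW US_mult[OF uW uW]] by simp
  have g7: "GF J 4 (\<lambda>x. cst 16 * cst (pw (fst x)) * ((A x * (A x * A x) - 1) * (W x * W x)))"
    using GF_scale[OF good_const[of 16] GF_scale[OF pw g6]] by (simp add: mult.assoc)
  have "GF J 4 (\<lambda>x. 3 * (A x * (W x * aa x - a x * w x) - W x * (a x * a x))
     + cst 16 * cst (pw (fst x)) * ((A x * (A x * A x) - 1) * (W x * W x)))"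
    by (rule GF_add[OF g5 g7])
  thus ?thesis by (simp add: Eg_alt W_def a_def aa_def w_def)
qed

lemma good_inv_lam:
  assumes n: "(3*k - s - 2) * (3*k - s) \<noteq> (0::int)"
  shows "good (\<lambda>w. - 1 / lam (fst w) (fst (snd w)) (snd (snd (snd w))) k s)"
proof -
  define C where "C = - 1 / (12 * \<i>^2 * of_int ((3*k - s - 2) * (3*k - s)) :: complex)"
  have g: "good (\<lambda>w. C / snd (snd (snd w)) / fst w / fst w / fst w / fst (snd w) / fst (snd w))"
    by (intro good_div1 good_div2 good_div4 good_const)
  have nz: "(of_int ((3*k - s - 2) * (3*k - s)) :: complex) \<noteq> 0" using n by (metis of_int_eq_0_iff)
  show ?thesis
  proof (rule good_cong[OF g])
    fix w assume "w \<in> Dom"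
    hence "fst w \<noteq> 0" "fst (snd w) \<noteq> 0" "snd (snd (snd w)) \<noteq> 0" by (auto simp: Dom_def)
    thus "C / snd (snd (snd w)) / fst w / fst w / fst w / fst (snd w) / fst (snd w) =
        - 1 / lam (fst w) (fst (snd w)) (snd (snd (snd w))) k s"
      using nz unfolding C_def lam_def by (simp add: field_simps power2_eq_square)
  qed
qed

abbreviation "Ax pw k x \<equiv> Aseq (Kx x) (Px x) (pw (fst x)) (qx x) (snd x) k"

lemma fun_Gc_subst: "f = g \<Longrightarrow> g \<in> Gc J m \<Longrightarrow> f \<in> Gc J m" by simp

lemma bk_Gc:
  assumes pw: "good pw" and GA: "GF J 0 (Ax pw k)"
    and res: "b = 3 * int (Suc k) \<or> b = 3 * int (Suc k) - 2 \<Longrightarrow> 2 * Suc k \<le> J"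
  shows "(\<lambda>x. bk (Kx x) (Px x) (pw (fst x)) (qx x) (snd x) (Suc k) (Ax pw k x) b)
      \<in> Gc J ((int (Suc k) + b) div 2)"
proof -
  have SA: "\<And>x. spp (Ax pw k x) 0 0" by (rule spp_Aseq)
  show ?thesis
  proof (cases "b = 3 * int (Suc k)")
    case True
    have J: "1 \<le> 2 * Suc k" "2 * Suc k \<le> J" using res True by auto
    have "(\<lambda>x. snd x (2 * Suc k)) \<in> Gc J (int (2 * Suc k))" by (rule Gc_var[OF J])
    moreover have "int (2 * Suc k) = (int (Suc k) + b) div 2" using True by simp
    ultimately show ?thesis using True by (simp add: bk_def)
  next
    case F1: False
    show ?thesis
    proof (cases "b = 3 * int (Suc k) - 2")
      case True
      have J: "1 \<le> 2 * Suc k - 1" "2 * Suc k - 1 \<le> J" using res True by auto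
      have "(\<lambda>x. snd x (2 * Suc k - 1)) \<in> Gc J (int (2 * Suc k - 1))" by (rule Gc_var[OF J])
      moreover have "int (2 * Suc k - 1) = (int (Suc k) + b) div 2" using True by simp
      ultimately show ?thesis using True F1 by (simp add: bk_def)
    next
      case F2: False
      show ?thesis
      proof (cases "- int (Suc k) \<le> b \<and> b \<le> 3 * int (Suc k)")
        case True
        have n: "(3 * int (Suc k) - b - 2) * (3 * int (Suc k) - b) \<noteq> 0" using F1 F2 by auto
        have E: "GF J 4 (\<lambda>x. Eg (Kx x) (Px x) (pw (fst x)) (Ax pw k x))"
          by (rule GF_Eg[OF pw GA SA])
        have "(\<lambda>x. (\<lambda>w. - 1 / lam (fst w) (fst (snd w)) (snd (snd (snd w))) (int (Suc k)) b) (fst x)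
             * co (Eg (Kx x) (Px x) (pw (fst x)) (Ax pw k x)) (int (Suc k) + 1) (b + 7))
           \<in> Gc J ((int (Suc k) + 1 + (b + 7)) div 2 - 4)"
          by (rule Gc_scale[OF good_inv_lam[OF n] GFD[OF E]])
        moreover have "(int (Suc k) + 1 + (b + 7)) div 2 - 4 = (int (Suc k) + b) div 2"
        proof -
          have "int (Suc k) + 1 + (b + 7) = (int (Suc k) + b) + 2 * 4" by simp
          thus ?thesis by simp
        qed
        moreover have "(\<lambda>x. bk (Kx x) (Px x) (pw (fst x)) (qx x) (snd x) (Suc k) (Ax pw k x) b)
           = (\<lambda>x. (\<lambda>w. - 1 / lam (fst w) (fst (snd w)) (snd (snd (snd w))) (int (Suc k)) b) (fst x)
             * co (Eg (Kx x) (Px x) (pw (fst x)) (Ax pw k x)) (int (Suc k) + 1) (b + 7))"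
        proof (rule ext)
          fix x
          show "bk (Kx x) (Px x) (pw (fst x)) (qx x) (snd x) (Suc k) (Ax pw k x) b
           = (\<lambda>w. - 1 / lam (fst w) (fst (snd w)) (snd (snd (snd w))) (int (Suc k)) b) (fst x)
             * co (Eg (Kx x) (Px x) (pw (fst x)) (Ax pw k x)) (int (Suc k) + 1) (b + 7)"
            unfolding bk_def using True F1 F2 by (simp add: divide_inverse ac_simps)
        qed
        ultimately show ?thesis by simp
      next
        case False
        hence "(\<lambda>x. bk (Kx x) (Px x) (pw (fst x)) (qx x) (snd x) (Suc k) (Ax pw k x) b) = (\<lambda>x. 0)"
          using F1 F2 by (auto simp: bk_def fun_eq_iff)
        thus ?thesis by (rule fun_Gc_subst) simp
      qed
    qed
  qed
qed

lemma GF_Aseq: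
  assumes pw: "good pw"
  shows "2 * k \<le> J \<Longrightarrow> GF J 0 (Ax pw k)"
proof (induction k)
  case 0
  show ?case using GF_cst[OF good_p4, of J] by simp
next
  case (Suc k)
  have GA: "GF J 0 (Ax pw k)" using Suc by simp
  have "GF J 0 (\<lambda>x. Hm (Suc k) (Bfn (Kx x) (Px x) (pw (fst x)) (qx x) (snd x) (Suc k) (Ax pw k x)))"
    unfolding GF_def
  proof (intro allI)
    fix a b
    show "(\<lambda>x. co (Hm (Suc k) (Bfn (Kx x) (Px x) (pw (fst x)) (qx x) (snd x) (Suc k) (Ax pw k x))) a b)
        \<in> Gc J ((a + b) div 2 - 0)"
    proof (cases "a = int (Suc k)")
      case True
      have "(\<lambda>x. bk (Kx x) (Px x) (pw (fst x)) (qx x) (snd x) (Suc k) (Ax pw k x) b)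
          \<in> Gc J ((int (Suc k) + b) div 2)"
        by (rule bk_Gc[OF pw GA]) (use Suc.prems in simp)
      thus ?thesis using True by (simp add: co_Hk Bfn_nth)
    next
      case False
      hence "(\<lambda>x. co (Hm (Suc k) (Bfn (Kx x) (Px x) (pw (fst x)) (qx x) (snd x) (Suc k) (Ax pw k x))) a b) = (\<lambda>x. 0)"
        by (simp add: co_Hk fun_eq_iff)
      thus ?thesis by (rule fun_Gc_subst) simp
    qed
  qed
  hence "GF J 0 (\<lambda>x. Ax pw k x + Hm (Suc k) (Bfn (Kx x) (Px x) (pw (fst x)) (qx x) (snd x) (Suc k) (Ax pw k x)))"
    by (rule GF_add[OF GA])
  thus ?case by simp
qed

lemma sol_Gc:
  assumes pw: "good pw" and k: "1 \<le> k" and m: "m \<le> 2 * k - 2"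
  shows "(\<lambda>x. sol (Kx x) (Px x) (pw (fst x)) (qx x) (snd x) k $$ (int (2 * m) - int k)) \<in> Gc (2 * k - 2) (int m)"
proof -
  obtain k' where k': "k = Suc k'" using k by (cases k) auto
  have GA: "GF (2 * k - 2) 0 (Ax pw k')" by (rule GF_Aseq[OF pw]) (simp add: k')
  have "(\<lambda>x. bk (Kx x) (Px x) (pw (fst x)) (qx x) (snd x) (Suc k') (Ax pw k' x) (int (2 * m) - int k))
      \<in> Gc (2 * k - 2) ((int (Suc k') + (int (2 * m) - int k)) div 2)"
    by (rule bk_Gc[OF pw GA]) (use m k' in auto)
  moreover have "(int (Suc k') + (int (2 * m) - int k)) div 2 = int m" using k' by simp
  ultimately show ?thesis using k' by (simp add: sol_Suc Bfn_nth)
qed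

lemma ES_expset: "ES (2 * k - 2) (int m) = expset k m"
  unfolding ES_def expset_def of_nat_le_iff ..

lemma cB_sol:
  assumes j: "1 \<le> j" shows "cB (sol K P p2 q c) j = c j"
proof (cases "even j")
  case True
  then obtain i where i: "j = 2 * i" by (rule evenE)
  with j have i1: "1 \<le> i" by simp
  have "cB (sol K P p2 q c) j = sol K P p2 q c i $$ (3 * int i)" using True i by (simp add: cB_def)
  also have "\<dots> = c (2 * i)" by (rule sol_norm(1)[OF i1])
  finally show ?thesis using i by simp
next
  case False
  then obtain i where i: "j = 2 * i + 1" by (rule oddE)
  have i1: "1 \<le> Suc i" by simp
  have "(j + 1) div 2 = Suc i" using i by simp
  hence "cB (sol K P p2 q c) j = sol K P p2 q c (Suc i) $$ (3 * int (Suc i) - 2)" using False by (simp add: cB_def)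
  also have "\<dots> = c (2 * Suc i - 1)" by (rule sol_norm(2)[OF i1])
  finally show ?thesis using i by simp
qed

definition Pkm :: "(w4 \<Rightarrow> complex) \<Rightarrow> nat \<Rightarrow> nat \<Rightarrow> ((nat \<Rightarrow> nat) \<Rightarrow> w4 \<Rightarrow> complex) \<Rightarrow> bool" where
  "Pkm pw k m r \<longleftrightarrow> (\<forall>n. good (r n)) \<and> (\<forall>w\<in>Dom. \<forall>c.
     sol (fst w) (fst (snd w)) (pw w) (snd (snd (snd w))) c k $$ (int (2 * m) - int k)
       = (\<Sum>n\<in>expset k m. r n w * cmono c n (2 * k - 2)))"

lemma GEN:
  assumes pw: "good pw"
  shows "\<exists>N D. \<forall>k m. 1 \<le> k \<longrightarrow> m \<le> 2 * k - 2 \<longrightarrow>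
     (\<forall>n w. w \<in> Dom \<longrightarrow> eval4 (D k m n) w \<noteq> 0) \<and>
     (\<forall>w\<in>Dom. \<forall>c. sol (fst w) (fst (snd w)) (pw w) (snd (snd (snd w))) c k $$ (int (2 * m) - int k)
       = (\<Sum>n\<in>expset k m. eval4 (N k m n) w / eval4 (D k m n) w * cmono c n (2 * k - 2)))"
proof -
  have ex: "\<exists>r. Pkm pw k m r" if "1 \<le> k" "m \<le> 2 * k - 2" for k m
  proof -
    have "(\<lambda>x. sol (Kx x) (Px x) (pw (fst x)) (qx x) (snd x) k $$ (int (2 * m) - int k)) \<in> Gc (2 * k - 2) (int m)"
      by (rule sol_Gc[OF pw that])
    then obtain r where "\<forall>n. good (r n)" "\<forall>w\<in>Dom. \<forall>c.
       sol (fst w) (fst (snd w)) (pw w) (snd (snd (snd w))) c k $$ (int (2 * m) - int k)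
       = (\<Sum>n\<in>ES (2 * k - 2) (int m). r n w * cmono c n (2 * k - 2))"
      unfolding Gc_def by auto
    thus ?thesis unfolding Pkm_def ES_expset by blast
  qed
  define R where "R k m = (SOME r. Pkm pw k m r)" for k m
  have R: "Pkm pw k m (R k m)" if "1 \<le> k" "m \<le> 2 * k - 2" for k m
    unfolding R_def by (rule someI_ex[OF ex[OF that]])
  have exND: "\<exists>ND. \<forall>w\<in>Dom. eval4 (snd ND) w \<noteq> 0 \<and> R k m n w = eval4 (fst ND) w / eval4 (snd ND) w"
    if "1 \<le> k" "m \<le> 2 * k - 2" for k m n
  proof -
    have "good (R k m n)" using R[OF that] by (simp add: Pkm_def)
    then obtain N D where "\<forall>w\<in>Dom. eval4 D w \<noteq> 0 \<and> R k m n w = eval4 N w / eval4 D w"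
      unfolding good_def by blast
    thus ?thesis by (intro exI[of _ "(N, D)"]) simp
  qed
  define ND where "ND k m n = (SOME ND. \<forall>w\<in>Dom. eval4 (snd ND) w \<noteq> 0 \<and> R k m n w = eval4 (fst ND) w / eval4 (snd ND) w)" for k m n
  have ND: "\<forall>w\<in>Dom. eval4 (snd (ND k m n)) w \<noteq> 0 \<and> R k m n w = eval4 (fst (ND k m n)) w / eval4 (snd (ND k m n)) w"
    if "1 \<le> k" "m \<le> 2 * k - 2" for k m n
    unfolding ND_def by (rule someI_ex[OF exND[OF that]])
  show ?thesis
  proof (rule exI[of _ "\<lambda>k m n. fst (ND k m n)"], rule exI[of _ "\<lambda>k m n. snd (ND k m n)"], intro allI impI conjI)
    fix k m :: nat and n w assume km: "1 \<le> k" "m \<le> 2 * k - 2" and w: "w \<in> Dom"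
    show "eval4 (snd (ND k m n)) w \<noteq> 0" using ND[OF km] w by blast
  next
    fix k m :: nat assume km: "1 \<le> k" "m \<le> 2 * k - 2"
    show "\<forall>w\<in>Dom. \<forall>c. sol (fst w) (fst (snd w)) (pw w) (snd (snd (snd w))) c k $$ (int (2 * m) - int k)
       = (\<Sum>n\<in>expset k m. eval4 (fst (ND k m n)) w / eval4 (snd (ND k m n)) w * cmono c n (2 * k - 2))"
    proof (intro ballI allI)
      fix w c assume w: "w \<in> Dom"
      have "sol (fst w) (fst (snd w)) (pw w) (snd (snd (snd w))) c k $$ (int (2 * m) - int k)
         = (\<Sum>n\<in>expset k m. R k m n w * cmono c n (2 * k - 2))"
        using R[OF km] w by (simp add: Pkm_def)
      also have "\<dots> = (\<Sum>n\<in>expset k m. eval4 (fst (ND k m n)) w / eval4 (snd (ND k m n)) w * cmono c n (2 * k - 2))"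
        by (rule sum.cong[OF refl]) (use ND[OF km] w in auto)
      finally show "sol (fst w) (fst (snd w)) (pw w) (snd (snd (snd w))) c k $$ (int (2 * m) - int k)
       = (\<Sum>n\<in>expset k m. eval4 (fst (ND k m n)) w / eval4 (snd (ND k m n)) w * cmono c n (2 * k - 2))" .
    qed
  qed
qed

lemma support_form:
  assumes "sol K P p2 q c k $$ j \<noteq> 0" shows "\<exists>m \<le> 2 * k. j = int (2 * m) - int k"
proof -
  from sol_support[OF assms] have j: "- int k \<le> j" "j \<le> 3 * int k" "even (int k + j)" by auto
  from j(3) obtain t where t: "int k + j = 2 * t" by (metis evenE)
  show ?thesis by (rule exI[of _ "nat t"]) (use j t in auto)
qed

theorem proposition2:
  shows
  "(\<exists>N D. \<forall>P p \<kappa>. P \<noteq> 0 \<and> p \<noteq> 0 \<and> \<kappa> \<noteq> 0 \<longrightarrow>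
      (\<forall>B. formal_solution P p \<kappa> B \<and> B 0 \<noteq> 0 \<longrightarrow>
         (\<exists>q. q \<noteq> 0 \<and> B 0 = fls_const q \<and>
            (\<exists>c1 c2. B 1 = fls_const c2 * fls_X ^ 3 + fls_const c1 * fls_X
                + fls_const (8 * p^2 * (q^3 - 1) / (3 * \<kappa>^2 * P^2 * q)) * fls_X_inv) \<and>
            coeff_form N D (\<kappa>^2, P, p, q) B)))
   \<and>
   (\<exists>N D. \<forall>P p \<kappa> q. P \<noteq> 0 \<and> p \<noteq> 0 \<and> \<kappa> \<noteq> 0 \<and> q \<noteq> 0 \<longrightarrow>
      (\<forall>c :: nat \<Rightarrow> complex.
         (\<exists>B. formal_solution P p \<kappa> B \<and> B 0 = fls_const q \<and>
              (\<forall>k \<ge> 1. fls_nth (B k) (int (3 * k)) = c (2 * k) \<and> fls_nth (B k) (int (3 * k) - 2) = c (2 * k - 1)) \<and>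
              coeff_form N D (\<kappa>^2, P, p^2, q) B) \<and>
         (\<forall>B B'. formal_solution P p \<kappa> B \<and> B 0 = fls_const q \<and>
              (\<forall>k \<ge> 1. fls_nth (B k) (int (3 * k)) = c (2 * k) \<and> fls_nth (B k) (int (3 * k) - 2) = c (2 * k - 1)) \<and>
              formal_solution P p \<kappa> B' \<and> B' 0 = fls_const q \<and>
              (\<forall>k \<ge> 1. fls_nth (B' k) (int (3 * k)) = c (2 * k) \<and> fls_nth (B' k) (int (3 * k) - 2) = c (2 * k - 1))
              \<longrightarrow> B = B')))"
proof (rule conjI)
  show "\<exists>N D. \<forall>P p \<kappa>. P \<noteq> 0 \<and> p \<noteq> 0 \<and> \<kappa> \<noteq> 0 \<longrightarrow>
      (\<forall>B. formal_solution P p \<kappa> B \<and> B 0 \<noteq> 0 \<longrightarrow>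
         (\<exists>q. q \<noteq> 0 \<and> B 0 = fls_const q \<and>
            (\<exists>c1 c2. B 1 = fls_const c2 * fls_X ^ 3 + fls_const c1 * fls_X
                + fls_const (8 * p^2 * (q^3 - 1) / (3 * \<kappa>^2 * P^2 * q)) * fls_X_inv) \<and>
            coeff_form N D (\<kappa>^2, P, p, q) B))"
  proof -
    define pw where "pw = (\<lambda>w::w4. fst (snd (snd w)) * fst (snd (snd w)))"
    have gpw: "good pw" unfolding pw_def by (rule good_mult) simp_all
    obtain N D where ND: "\<forall>k m. 1 \<le> k \<longrightarrow> m \<le> 2 * k - 2 \<longrightarrow>
     (\<forall>n w. w \<in> Dom \<longrightarrow> eval4 (D k m n) w \<noteq> 0) \<and>
     (\<forall>w\<in>Dom. \<forall>c. sol (fst w) (fst (snd w)) (pw w) (snd (snd (snd w))) c k $$ (int (2 * m) - int k)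
       = (\<Sum>n\<in>expset k m. eval4 (N k m n) w / eval4 (D k m n) w * cmono c n (2 * k - 2)))"
      using GEN[OF gpw] by blast
    show ?thesis
    proof (rule exI[of _ N], rule exI[of _ D], intro allI impI)
      fix P p \<kappa> B
      assume prm: "P \<noteq> 0 \<and> p \<noteq> 0 \<and> \<kappa> \<noteq> 0" and BB: "formal_solution P p \<kappa> B \<and> B 0 \<noteq> 0"
      have P: "P \<noteq> 0" and k: "\<kappa> \<noteq> 0" using prm by auto
      have pde: "pde P p \<kappa> (series B)" using BB by (simp add: formal_solution_def)
      obtain q where q: "q \<noteq> 0" and B0: "B 0 = fls_const q" using B0_const[OF k P pde] BB by blast
      define c where "c = cB B"
      have norm: "\<forall>k\<ge>1. B k $$ (3 * int k) = c (2*k) \<and> B k $$ (3 * int k - 2) = c (2*k - 1)"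
      proof (intro allI impI conjI)
        fix k :: nat assume k1: "1 \<le> k"
        show "B k $$ (3 * int k) = c (2*k)" by (simp add: c_def cB_def)
        have "odd (2 * k - 1)" "(2 * k - 1 + 1) div 2 = k" using k1 by auto
        thus "B k $$ (3 * int k - 2) = c (2*k - 1)" by (simp add: c_def cB_def)
      qed
      have Beq: "\<And>n. B n = sol (\<kappa>^2) P (p^2) q c n"
        by (rule sol_unique[OF k P q pde B0 norm])
      define w where "w = (\<kappa>^2, P, p, q)"
      have wD: "w \<in> Dom" using k P q by (simp add: w_def Dom_def)
      have solw: "sol (fst w) (fst (snd w)) (pw w) (snd (snd (snd w))) c = sol (\<kappa>^2) P (p^2) q c"
        by (simp add: w_def pw_def power2_eq_square)
      have K: "\<kappa>^2 \<noteq> 0" using k by simp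
      show "\<exists>q. q \<noteq> 0 \<and> B 0 = fls_const q \<and>
            (\<exists>c1 c2. B 1 = fls_const c2 * fls_X ^ 3 + fls_const c1 * fls_X
                + fls_const (8 * p^2 * (q^3 - 1) / (3 * \<kappa>^2 * P^2 * q)) * fls_X_inv) \<and>
            coeff_form N D (\<kappa>^2, P, p, q) B"
      proof (rule exI[of _ q], intro conjI)
        show "q \<noteq> 0" by (rule q)
        show "B 0 = fls_const q" by (rule B0)
        show "\<exists>c1 c2. B 1 = fls_const c2 * fls_X ^ 3 + fls_const c1 * fls_X
                + fls_const (8 * p^2 * (q^3 - 1) / (3 * \<kappa>^2 * P^2 * q)) * fls_X_inv"
        proof (intro exI)
          show "B 1 = fls_const (c 2) * fls_X ^ 3 + fls_const (c 1) * fls_X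
                + fls_const (8 * p^2 * (q^3 - 1) / (3 * \<kappa>^2 * P^2 * q)) * fls_X_inv"
            using sol_1[OF q K P, of "p^2" c] Beq[of 1] by simp
        qed
        show "coeff_form N D (\<kappa>^2, P, p, q) B"
          unfolding coeff_form_def w_def[symmetric]
        proof (intro allI impI conjI ballI)
          fix k :: nat and j :: int assume k1: "1 \<le> k" and nz: "B k $$ j \<noteq> 0"
          show "\<exists>m \<le> 2 * k. j = int (2 * m) - int k" using nz unfolding Beq[of k] by (rule support_form)
        next
          fix k m :: nat and n assume k1: "1 \<le> k" and m: "m \<le> 2 * k - 2" and "n \<in> expset k m"
          show "eval4 (D k m n) w \<noteq> 0" using ND k1 m wD by blast
        next
          fix k m :: nat assume k1: "1 \<le> k" and m: "m \<le> 2 * k - 2"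
          have "B k $$ (int (2 * m) - int k) = sol (fst w) (fst (snd w)) (pw w) (snd (snd (snd w))) c k $$ (int (2 * m) - int k)"
            by (simp add: solw Beq)
          also have "\<dots> = (\<Sum>n\<in>expset k m. eval4 (N k m n) w / eval4 (D k m n) w * cmono c n (2 * k - 2))"
            using ND k1 m wD by blast
          finally show "B k $$ (int (2 * m) - int k) =
              (\<Sum>n\<in>expset k m. eval4 (N k m n) w / eval4 (D k m n) w * (\<Prod>j = 1..2 * k - 2. cB B j ^ n j))"
            by (simp add: cmono_def c_def)
        qed
      qed
    qed
  qed
next
  show "\<exists>N D. \<forall>P p \<kappa> q. P \<noteq> 0 \<and> p \<noteq> 0 \<and> \<kappa> \<noteq> 0 \<and> q \<noteq> 0 \<longrightarrow>
      (\<forall>c :: nat \<Rightarrow> complex.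
         (\<exists>B. formal_solution P p \<kappa> B \<and> B 0 = fls_const q \<and>
              (\<forall>k \<ge> 1. fls_nth (B k) (int (3 * k)) = c (2 * k) \<and> fls_nth (B k) (int (3 * k) - 2) = c (2 * k - 1)) \<and>
              coeff_form N D (\<kappa>^2, P, p^2, q) B) \<and>
         (\<forall>B B'. formal_solution P p \<kappa> B \<and> B 0 = fls_const q \<and>
              (\<forall>k \<ge> 1. fls_nth (B k) (int (3 * k)) = c (2 * k) \<and> fls_nth (B k) (int (3 * k) - 2) = c (2 * k - 1)) \<and>
              formal_solution P p \<kappa> B' \<and> B' 0 = fls_const q \<and>
              (\<forall>k \<ge> 1. fls_nth (B' k) (int (3 * k)) = c (2 * k) \<and> fls_nth (B' k) (int (3 * k) - 2) = c (2 * k - 1))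
              \<longrightarrow> B = B'))"
  proof -
    define pw where "pw = (\<lambda>w::w4. fst (snd (snd w)))"
    have gpw: "good pw" unfolding pw_def by simp
    obtain N D where ND: "\<forall>k m. 1 \<le> k \<longrightarrow> m \<le> 2 * k - 2 \<longrightarrow>
     (\<forall>n w. w \<in> Dom \<longrightarrow> eval4 (D k m n) w \<noteq> 0) \<and>
     (\<forall>w\<in>Dom. \<forall>c. sol (fst w) (fst (snd w)) (pw w) (snd (snd (snd w))) c k $$ (int (2 * m) - int k)
       = (\<Sum>n\<in>expset k m. eval4 (N k m n) w / eval4 (D k m n) w * cmono c n (2 * k - 2)))"
      using GEN[OF gpw] by blast
    show ?thesis
    proof (rule exI[of _ N], rule exI[of _ D], intro allI impI)
      fix P p \<kappa> q :: complex and c :: "nat \<Rightarrow> complex"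
      assume prm: "P \<noteq> 0 \<and> p \<noteq> 0 \<and> \<kappa> \<noteq> 0 \<and> q \<noteq> 0"
      have P: "P \<noteq> 0" and k: "\<kappa> \<noteq> 0" and q: "q \<noteq> 0" using prm by auto
      define S where "S = sol (\<kappa>^2) P (p^2) q c"
      define w where "w = (\<kappa>^2, P, p^2, q)"
      have wD: "w \<in> Dom" using k P q by (simp add: w_def Dom_def)
      have solw: "sol (fst w) (fst (snd w)) (pw w) (snd (snd (snd w))) c = S"
        by (simp add: w_def pw_def S_def)
      have E: "\<exists>B. formal_solution P p \<kappa> B \<and> B 0 = fls_const q \<and>
              (\<forall>k \<ge> 1. fls_nth (B k) (int (3 * k)) = c (2 * k) \<and> fls_nth (B k) (int (3 * k) - 2) = c (2 * k - 1)) \<and>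
              coeff_form N D (\<kappa>^2, P, p^2, q) B"
      proof (rule exI[of _ S], intro conjI)
        show "formal_solution P p \<kappa> S" unfolding S_def by (rule sol_exists[OF k P q])
        show "S 0 = fls_const q" by (simp add: S_def sol_0)
        show "\<forall>k \<ge> 1. S k $$ (int (3 * k)) = c (2 * k) \<and> S k $$ (int (3 * k) - 2) = c (2 * k - 1)"
          using sol_norm by (simp add: S_def)
        show "coeff_form N D (\<kappa>^2, P, p^2, q) S"
          unfolding coeff_form_def w_def[symmetric]
        proof (intro allI impI conjI ballI)
          fix k :: nat and j :: int assume k1: "1 \<le> k" and nz: "S k $$ j \<noteq> 0"
          show "\<exists>m \<le> 2 * k. j = int (2 * m) - int k" using nz unfolding S_def by (rule support_form)
        next
          fix k m :: nat and n assume k1: "1 \<le> k" and m: "m \<le> 2 * k - 2" and "n \<in> expset k m"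
          show "eval4 (D k m n) w \<noteq> 0" using ND k1 m wD by blast
        next
          fix k m :: nat assume k1: "1 \<le> k" and m: "m \<le> 2 * k - 2"
          have "S k $$ (int (2 * m) - int k) = sol (fst w) (fst (snd w)) (pw w) (snd (snd (snd w))) c k $$ (int (2 * m) - int k)"
            by (simp add: solw)
          also have "\<dots> = (\<Sum>n\<in>expset k m. eval4 (N k m n) w / eval4 (D k m n) w * cmono c n (2 * k - 2))"
            using ND k1 m wD by blast
          also have "\<dots> = (\<Sum>n\<in>expset k m. eval4 (N k m n) w / eval4 (D k m n) w * (\<Prod>j = 1..2 * k - 2. cB S j ^ n j))"
            unfolding cmono_def
          proof (rule sum.cong[OF refl])
            fix n
            have "(\<Prod>j = 1..2 * k - 2. c j ^ n j) = (\<Prod>j = 1..2 * k - 2. cB S j ^ n j)"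
              by (rule prod.cong[OF refl]) (simp add: S_def cB_sol)
            thus "eval4 (N k m n) w / eval4 (D k m n) w * (\<Prod>j = 1..2 * k - 2. c j ^ n j)
                = eval4 (N k m n) w / eval4 (D k m n) w * (\<Prod>j = 1..2 * k - 2. cB S j ^ n j)" by simp
          qed
          finally show "S k $$ (int (2 * m) - int k) =
              (\<Sum>n\<in>expset k m. eval4 (N k m n) w / eval4 (D k m n) w * (\<Prod>j = 1..2 * k - 2. cB S j ^ n j))" .
        qed
      qed
      have U: "\<forall>B B'. formal_solution P p \<kappa> B \<and> B 0 = fls_const q \<and>
              (\<forall>k \<ge> 1. fls_nth (B k) (int (3 * k)) = c (2 * k) \<and> fls_nth (B k) (int (3 * k) - 2) = c (2 * k - 1)) \<and>
              formal_solution P p \<kappa> B' \<and> B' 0 = fls_const q \<and>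
              (\<forall>k \<ge> 1. fls_nth (B' k) (int (3 * k)) = c (2 * k) \<and> fls_nth (B' k) (int (3 * k) - 2) = c (2 * k - 1))
              \<longrightarrow> B = B'"
      proof (intro allI impI)
        fix B B' :: "nat \<Rightarrow> complex fls"
        assume H: "formal_solution P p \<kappa> B \<and> B 0 = fls_const q \<and>
              (\<forall>k \<ge> 1. fls_nth (B k) (int (3 * k)) = c (2 * k) \<and> fls_nth (B k) (int (3 * k) - 2) = c (2 * k - 1)) \<and>
              formal_solution P p \<kappa> B' \<and> B' 0 = fls_const q \<and>
              (\<forall>k \<ge> 1. fls_nth (B' k) (int (3 * k)) = c (2 * k) \<and> fls_nth (B' k) (int (3 * k) - 2) = c (2 * k - 1))"
        have n1: "\<forall>k\<ge>1. B k $$ (3 * int k) = c (2*k) \<and> B k $$ (3 * int k - 2) = c (2*k - 1)"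
          using H by simp
        have n2: "\<forall>k\<ge>1. B' k $$ (3 * int k) = c (2*k) \<and> B' k $$ (3 * int k - 2) = c (2*k - 1)"
          using H by simp
        have p1: "pde P p \<kappa> (series B)" and p2: "pde P p \<kappa> (series B')"
          using H by (simp_all add: formal_solution_def)
        have "\<And>n. B n = sol (\<kappa>^2) P (p^2) q c n" by (rule sol_unique[OF k P q p1 _ n1]) (use H in simp)
        moreover have "\<And>n. B' n = sol (\<kappa>^2) P (p^2) q c n" by (rule sol_unique[OF k P q p2 _ n2]) (use H in simp)
        ultimately show "B = B'" by auto
      qed
      show "(\<exists>B. formal_solution P p \<kappa> B \<and> B 0 = fls_const q \<and>
              (\<forall>k \<ge> 1. fls_nth (B k) (int (3 * k)) = c (2 * k) \<and> fls_nth (B k) (int (3 * k) - 2) = c (2 * k - 1)) \<and>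
              coeff_form N D (\<kappa>^2, P, p^2, q) B) \<and> (\<forall>B B'. formal_solution P p \<kappa> B \<and> B 0 = fls_const q \<and>
              (\<forall>k \<ge> 1. fls_nth (B k) (int (3 * k)) = c (2 * k) \<and> fls_nth (B k) (int (3 * k) - 2) = c (2 * k - 1)) \<and>
              formal_solution P p \<kappa> B' \<and> B' 0 = fls_const q \<and>
              (\<forall>k \<ge> 1. fls_nth (B' k) (int (3 * k)) = c (2 * k) \<and> fls_nth (B' k) (int (3 * k) - 2) = c (2 * k - 1))
              \<longrightarrow> B = B')"
        using E U by (rule conjI)
    qed
  qed
qed

end
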